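(* Let $n\ge1$, let $G$ be a simple graph on $[n]$, and let $\mathcal{S}_{n,G}$ be the arrangement in $\mathbb{R}^n$ consisting of the hyperplanes $x_i-x_j=0$ for all $1\le i<j\le n$ and $x_i-x_j=1$ for all $1\le i<j\le n$ with $\{i,j\}\in G$. The map $\sigma_{n,G}$ (defined below) is a bijection between the regions of $\mathcal{S}_{n,G}$ and the parking functions $f=(a_1,\ldots,a_n)$ on $[n]$ satisfying the following condition: for every $i$, if there exists $j>i$ with $a_i=a_j$ and $j$ is the smallest such integer, then $\{i,j\}\in G$.
   Context: A region of an arrangement is a connected component of the complement of the union of its hyperplanes. A parking function on $[n]$ is a map $f:[n]\to[n]$, written $(a_1,\ldots,a_n)$ with $a_i=f(i)$, such that $|f^{-1}(\{1,\ldots,j\})|\ge j$ for all $1\le j\le n$. For a region $R$ of $\mathcal{S}_{n,G}$, let $w=w_1\cdots w_n$ be the unique permutation of $[n]$ with $x_{w_1}>\cdots>x_{w_n}$ on $R$; the position of $m$ is the index $p$ with $w_p=m$. Draw an arc from $i$ to $j$ whenever $i<j$, $\{i,j\}\in G$, and $x_i-x_j>1$ holds on $R$. Then remove every arc $(i,l)$ for which there is a different arc $(j,k)$ with $i$ weakly left of $j$ and $k$ weakly left of $l$ in $w$. The remaining arcs partition $[n]$ into chains (connected components) of increasing integers. The map $\sigma_{n,G}$ sends $R$ to $f$ with $f(i)$ equal to the position in $w$ of the leftmost element of the chain containing $i$. *)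

theory Defs
  imports "HOL-Analysis.Analysis"
begin

text \<open>Points of R^n are modelled as functions nat => real that vanish outside {1..n}
  (a subspace of the product topology homeomorphic to Euclidean n-space).\<close>

definition simple_graph_on :: "nat \<Rightarrow> nat set set \<Rightarrow> bool" where
  "simple_graph_on n G \<longleftrightarrow> G \<subseteq> {{i, j} | i j. 1 \<le> i \<and> i < j \<and> j \<le> n}"

definition S_complement :: "nat \<Rightarrow> nat set set \<Rightarrow> (nat \<Rightarrow> real) set" where
  "S_complement n G = {x. (\<forall>i. i \<notin> {1..n} \<longrightarrow> x i = 0)
     \<and> (\<forall>i j. 1 \<le> i \<and> i < j \<and> j \<le> n \<longrightarrow> x i - x j \<noteq> 0)
     \<and> (\<forall>i j. 1 \<le> i \<and> i < j \<and> j \<le> n \<and> {i, j} \<in> G \<longrightarrow> x i - x j \<noteq> 1)}"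

definition S_regions :: "nat \<Rightarrow> nat set set \<Rightarrow> (nat \<Rightarrow> real) set set" where
  "S_regions n G = {connected_component_set (S_complement n G) x | x. x \<in> S_complement n G}"

definition region_word :: "nat \<Rightarrow> (nat \<Rightarrow> real) set \<Rightarrow> nat list" where
  "region_word n R = (THE w. distinct w \<and> set w = {1..n}
       \<and> (\<forall>x\<in>R. sorted_wrt (\<lambda>a b. x a > x b) w))"

text \<open>1-based position of m in w.\<close>
definition pos :: "nat list \<Rightarrow> nat \<Rightarrow> nat" where
  "pos w m = (THE p. 1 \<le> p \<and> p \<le> length w \<and> w ! (p - 1) = m)"

definition region_arcs :: "nat \<Rightarrow> nat set set \<Rightarrow> (nat \<Rightarrow> real) set \<Rightarrow> (nat \<times> nat) set" where
  "region_arcs n G R = {(i, j). 1 \<le> i \<and> i < j \<and> j \<le> n \<and> {i, j} \<in> G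
       \<and> (\<forall>x\<in>R. x i - x j > 1)}"

definition remaining_arcs :: "nat \<Rightarrow> nat set set \<Rightarrow> (nat \<Rightarrow> real) set \<Rightarrow> (nat \<times> nat) set" where
  "remaining_arcs n G R =
     (let w = region_word n R; A = region_arcs n G R in
      {(i, l) \<in> A. \<not> (\<exists>(j, k) \<in> A. (j, k) \<noteq> (i, l)
                         \<and> pos w i \<le> pos w j \<and> pos w k \<le> pos w l)})"

definition region_chain :: "nat \<Rightarrow> nat set set \<Rightarrow> (nat \<Rightarrow> real) set \<Rightarrow> nat \<Rightarrow> nat set" where
  "region_chain n G R i =
     {k. (i, k) \<in> (remaining_arcs n G R \<union> (remaining_arcs n G R)\<inverse>)\<^sup>*}"

definition sigma_nG :: "nat \<Rightarrow> nat set set \<Rightarrow> (nat \<Rightarrow> real) set \<Rightarrow> nat \<Rightarrow> nat" where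
  "sigma_nG n G R = (\<lambda>i. if i \<in> {1..n}
       then pos (region_word n R)
              (ARG_MIN (pos (region_word n R)) k. k \<in> region_chain n G R i)
       else 0)"

definition parking_function :: "nat \<Rightarrow> (nat \<Rightarrow> nat) \<Rightarrow> bool" where
  "parking_function n f \<longleftrightarrow> (\<forall>i\<in>{1..n}. f i \<in> {1..n}) \<and> (\<forall>i. i \<notin> {1..n} \<longrightarrow> f i = 0)
     \<and> (\<forall>j\<in>{1..n}. card {i \<in> {1..n}. f i \<le> j} \<ge> j)"

definition G_parking_functions :: "nat \<Rightarrow> nat set set \<Rightarrow> (nat \<Rightarrow> nat) set" where
  "G_parking_functions n G = {f. parking_function n f \<and>
     (\<forall>i\<in>{1..n}. (\<exists>j. i < j \<and> j \<le> n \<and> f i = f j) \<longrightarrow>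
        {i, LEAST j. i < j \<and> j \<le> n \<and> f i = f j} \<in> G)}"

end

theory Submission
  imports Defs
begin

lemma sign_const:
  fixes g :: "'a::topological_space \<Rightarrow> real"
  assumes "connected T" "continuous_on T g" "\<forall>z\<in>T. g z \<noteq> 0" "a \<in> T" "b \<in> T" "g a > 0"
  shows "g b > 0"
proof (rule ccontr)
  assume "\<not> g b > 0"
  with assms have "g b < 0" by force
  have "connected (g ` T)" using assms connected_continuous_image by blast
  then have "0 \<in> g ` T" using connected_iff_interval[of "g ` T"] assms \<open>g b < 0\<close>
    by (metis imageI less_eq_real_def)
  then show False using assms by auto
qed

lemma cont_diff: "continuous_on T (\<lambda>z::nat\<Rightarrow>real. z i - z j)"
  by (intro continuous_on_diff continuous_on_subset[OF continuous_on_product_coordinates]) auto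

lemma sign_const2:
  fixes T :: "(nat \<Rightarrow> real) set"
  assumes "connected T" "\<forall>z\<in>T. z i - z j \<noteq> c" "a \<in> T" "b \<in> T"
  shows "a i - a j > c \<longleftrightarrow> b i - b j > c"
proof -
  have c: "continuous_on T (\<lambda>z::nat\<Rightarrow>real. z i - z j - c)"
    by (intro continuous_on_diff cont_diff continuous_on_const)
  have n1: "\<forall>z\<in>T. z i - z j - c \<noteq> 0" "\<forall>z\<in>T. -(z i - z j - c) \<noteq> 0" using assms(2) by auto
  have c2: "continuous_on T (\<lambda>z::nat\<Rightarrow>real. -(z i - z j - c))" using c by (intro continuous_on_minus)
  show ?thesis
  proof
    assume "a i - a j > c" then show "b i - b j > c"
      using sign_const[OF assms(1) c n1(1) assms(3,4)] by auto
  next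
    assume h: "b i - b j > c"
    show "a i - a j > c"
    proof (rule ccontr)
      assume "\<not> a i - a j > c"
      then have "a i - a j < c" using assms by force
      then have "-(b i - b j - c) > 0"
        using sign_const[OF assms(1) c2 n1(2) assms(3,4)] by auto
      then show False using h by auto
    qed
  qed
qed

definition same_pat :: "nat \<Rightarrow> nat set set \<Rightarrow> (nat \<Rightarrow> real) \<Rightarrow> (nat \<Rightarrow> real) \<Rightarrow> bool" where
  "same_pat n G x y \<longleftrightarrow> (\<forall>i\<in>{1..n}. \<forall>j\<in>{1..n}. (x i > x j \<longleftrightarrow> y i > y j))
     \<and> (\<forall>i j. 1 \<le> i \<and> i < j \<and> j \<le> n \<and> {i, j} \<in> G \<longrightarrow> (x i - x j > 1 \<longleftrightarrow> y i - y j > 1))"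

lemma Sc_ne: assumes "z \<in> S_complement n G" "i \<in> {1..n}" "j \<in> {1..n}" "i \<noteq> j"
  shows "z i - z j \<noteq> 0"
proof (cases "i < j")
  case True then show ?thesis using assms unfolding S_complement_def by auto
next
  case False then have "j < i" using assms by auto
  then have "z j - z i \<noteq> 0" using assms unfolding S_complement_def by auto
  then show ?thesis by auto
qed

lemma comp_pat:
  assumes "y \<in> connected_component_set (S_complement n G) x"
  shows "same_pat n G x y"
proof -
  obtain T where T: "connected T" "T \<subseteq> S_complement n G" "x \<in> T" "y \<in> T"
    using assms unfolding connected_component_def by auto
  have 1: "x i > x j \<longleftrightarrow> y i > y j" if "i \<in> {1..n}" "j \<in> {1..n}" for i j
  proof (cases "i = j")
    case False
    have "\<forall>z\<in>T. z i - z j \<noteq> 0" using Sc_ne T(2) that False by blast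
    from sign_const2[OF T(1) this T(3,4)] show ?thesis by auto
  qed auto
  have 2: "x i - x j > 1 \<longleftrightarrow> y i - y j > 1" if "1 \<le> i \<and> i < j \<and> j \<le> n \<and> {i, j} \<in> G" for i j
  proof -
    have "\<forall>z\<in>T. z i - z j \<noteq> 1" using T(2) that unfolding S_complement_def by blast
    from sign_const2[OF T(1) this T(3,4)] show ?thesis .
  qed
  show ?thesis unfolding same_pat_def using 1 2 by blast
qed

lemma convex_pos:
  fixes a b u :: real
  assumes "0 \<le> u" "u \<le> 1" "a > 0" "b > 0"
  shows "(1 - u) * a + u * b > 0"
proof (cases "u = 0")
  case True then show ?thesis using assms by simp
next
  case False
  then have "u * b > 0" using assms by simp
  moreover have "(1 - u) * a \<ge> 0" using assms by simp
  ultimately show ?thesis by linarith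
qed

lemma convex_ne:
  fixes a b u :: real
  assumes "0 \<le> u" "u \<le> 1" "(a > 0 \<and> b > 0) \<or> (a < 0 \<and> b < 0)"
  shows "(1 - u) * a + u * b \<noteq> 0"
proof -
  have "(a > 0 \<and> b > 0) \<Longrightarrow> (1 - u) * a + u * b > 0"
    using assms convex_pos by blast
  moreover have "(a < 0 \<and> b < 0) \<Longrightarrow> (1 - u) * a + u * b < 0"
  proof -
    assume h: "a < 0 \<and> b < 0"
    have "(1 - u) * (-a) + u * (-b) > 0"
      using assms h convex_pos[of u "-a" "-b"] by auto
    then show ?thesis by (simp add: algebra_simps)
  qed
  ultimately show ?thesis using assms by force
qed

lemma pat_comp:
  assumes x: "x \<in> S_complement n G" and y: "y \<in> S_complement n G" and p: "same_pat n G x y"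
  shows "y \<in> connected_component_set (S_complement n G) x"
proof -
  define \<gamma> where "\<gamma> = (\<lambda>u::real. (\<lambda>i. (1 - u) * x i + u * y i))"
  have cont: "continuous_on {0..1} \<gamma>" unfolding \<gamma>_def
    by (intro continuous_on_coordinatewise_then_product continuous_intros)
  have conn: "connected (\<gamma> ` {0..1})"
    by (rule connected_continuous_image[OF cont]) simp
  have sub: "\<gamma> ` {0..1} \<subseteq> S_complement n G"
  proof
    fix z assume "z \<in> \<gamma> ` {0..1}"
    then obtain u where u: "0 \<le> u" "u \<le> 1" "z = \<gamma> u" by auto
    have zi: "z i - z j = (1 - u) * (x i - x j) + u * (y i - y j)" for i j
      using u unfolding \<gamma>_def by (simp add: algebra_simps)
    have zi1: "z i - z j - 1 = (1 - u) * (x i - x j - 1) + u * (y i - y j - 1)" for i j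
      using u unfolding \<gamma>_def by (simp add: algebra_simps)
    have A: "\<forall>i. i \<notin> {1..n} \<longrightarrow> z i = 0" using x y u unfolding \<gamma>_def S_complement_def by auto
    have B: "z i - z j \<noteq> 0" if "1 \<le> i \<and> i < j \<and> j \<le> n" for i j
    proof -
      have "x i - x j \<noteq> 0" "y i - y j \<noteq> 0" using x y that unfolding S_complement_def by auto
      moreover have "x i > x j \<longleftrightarrow> y i > y j" using p that unfolding same_pat_def by auto
      ultimately have "(x i - x j > 0 \<and> y i - y j > 0) \<or> (x i - x j < 0 \<and> y i - y j < 0)" by auto
      then show ?thesis unfolding zi using convex_ne u by blast
    qed
    have C: "z i - z j \<noteq> 1" if "1 \<le> i \<and> i < j \<and> j \<le> n \<and> {i, j} \<in> G" for i j
    proof -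
      have "x i - x j - 1 \<noteq> 0" "y i - y j - 1 \<noteq> 0" using x y that unfolding S_complement_def by auto
      moreover have "x i - x j > 1 \<longleftrightarrow> y i - y j > 1" using p that unfolding same_pat_def by auto
      ultimately have "(x i - x j - 1 > 0 \<and> y i - y j - 1 > 0) \<or> (x i - x j - 1 < 0 \<and> y i - y j - 1 < 0)" by auto
      then have "z i - z j - 1 \<noteq> 0" unfolding zi1 using convex_ne u by blast
      then show ?thesis by auto
    qed
    show "z \<in> S_complement n G" unfolding S_complement_def using A B C by auto
  qed
  have "\<gamma> 0 = x" "\<gamma> 1 = y" by (auto simp: \<gamma>_def)
  then have "x \<in> \<gamma> ` {0..1}" "y \<in> \<gamma> ` {0..1}"
    by (metis atLeastAtMost_iff image_eqI order_refl zero_le_one)+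
  then show ?thesis using conn sub connected_componentI by blast
qed

lemma pos_nth: assumes "distinct w" "k < length w" shows "pos w (w ! k) = Suc k"
  unfolding pos_def
proof (rule the_equality)
  fix p assume "1 \<le> p \<and> p \<le> length w \<and> w ! (p - 1) = w ! k"
  then have "p - 1 = k" using assms nth_eq_iff_index_eq[OF assms(1)] by auto
  then show "p = Suc k" using \<open>1 \<le> p \<and> _\<close> by auto
qed (use assms in auto)

lemma Sc_inj: assumes "z \<in> S_complement n G" "i \<in> {1..n}" "j \<in> {1..n}" "i \<noteq> j"
  shows "z i \<noteq> z j" using Sc_ne[OF assms] by auto

lemma word_exists:
  assumes x: "x \<in> S_complement n G"
  shows "\<exists>w. distinct w \<and> set w = {1..n} \<and> sorted_wrt (\<lambda>a b. x a > x b) w"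
proof -
  define w where "w = sort_key (\<lambda>i. - x i) [1..<Suc n]"
  have d: "distinct w" unfolding w_def by simp
  have s: "set w = {1..n}" unfolding w_def by auto
  have so: "sorted (map (\<lambda>i. - x i) w)" unfolding w_def by (rule sorted_sort_key)
  have "sorted_wrt (\<lambda>a b. x a > x b) w"
    unfolding sorted_wrt_iff_nth_less
  proof (intro allI impI)
    fix i j assume ij: "i < j" "j < length w"
    have "(map (\<lambda>i. - x i) w) ! i \<le> (map (\<lambda>i. - x i) w) ! j" using so ij
      by (simp add: sorted_iff_nth_mono)
    then have le: "- x (w ! i) \<le> - x (w ! j)" using ij by simp
    have "w ! i \<noteq> w ! j" using d ij nth_eq_iff_index_eq by (metis less_trans less_irrefl)
    moreover have "w ! i \<in> set w" "w ! j \<in> set w" using ij by simp_all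
    ultimately have "x (w ! i) \<noteq> x (w ! j)" using Sc_inj[OF x] s by blast
    then show "x (w ! i) > x (w ! j)" using le by linarith
  qed
  then show ?thesis using d s by blast
qed

lemma word_unique:
  assumes x: "x \<in> S_complement n G"
    and w1: "distinct w1" "set w1 = {1..n}" "sorted_wrt (\<lambda>a b. x a > x b) w1"
    and w2: "distinct w2" "set w2 = {1..n}" "sorted_wrt (\<lambda>a b. x a > x b) w2"
  shows "w1 = w2"
proof -
  have a: "sorted_wrt (<) (rev (map x w1))" "sorted_wrt (<) (rev (map x w2))"
    using w1 w2 by (auto simp: sorted_wrt_rev sorted_wrt_map)
  have "set (rev (map x w1)) = set (rev (map x w2))" using w1 w2 by simp
  then have "rev (map x w1) = rev (map x w2)" using strict_sorted_equal a by metis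
  then have "map x w1 = map x w2" by simp
  moreover have "inj_on x {1..n}" using Sc_inj[OF x] unfolding inj_on_def by blast
  then have "inj_on x (set w1 \<union> set w2)" using w1 w2 by simp
  ultimately show ?thesis using map_inj_on by blast
qed

lemma region_word_props:
  assumes x: "x \<in> S_complement n G"
  defines "w \<equiv> region_word n (connected_component_set (S_complement n G) x)"
  shows "distinct w \<and> set w = {1..n} \<and> sorted_wrt (\<lambda>a b. x a > x b) w"
proof -
  let ?R = "connected_component_set (S_complement n G) x"
  obtain w0 where w0: "distinct w0" "set w0 = {1..n}" "sorted_wrt (\<lambda>a b. x a > x b) w0"
    using word_exists[OF x] by blast
  have all: "\<forall>y\<in>?R. sorted_wrt (\<lambda>a b. y a > y b) w0"
  proof
    fix y assume "y \<in> ?R"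
    then have sp: "same_pat n G x y" by (rule comp_pat)
    show "sorted_wrt (\<lambda>a b. y a > y b) w0"
    proof (rule sorted_wrt_mono_rel[OF _ w0(3)])
      fix a b assume "a \<in> set w0" "b \<in> set w0" "x a > x b"
      then show "y a > y b" using sp w0(2) unfolding same_pat_def by blast
    qed
  qed
  have xR: "x \<in> ?R" using x by simp
  have "region_word n ?R = w0" unfolding region_word_def
  proof (rule the_equality)
    show "distinct w0 \<and> set w0 = {1..n} \<and> (\<forall>x\<in>?R. sorted_wrt (\<lambda>a b. x a > x b) w0)"
      using w0 all by blast
  next
    fix w' assume "distinct w' \<and> set w' = {1..n} \<and> (\<forall>x\<in>?R. sorted_wrt (\<lambda>a b. x a > x b) w')"
    then show "w' = w0" using word_unique[OF x _ _ _ w0] xR by blast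
  qed
  then show ?thesis using w0 w_def by simp
qed

definition posx :: "nat \<Rightarrow> nat set set \<Rightarrow> (nat \<Rightarrow> real) \<Rightarrow> nat \<Rightarrow> nat" where
  "posx n G x = pos (region_word n (connected_component_set (S_complement n G) x))"

lemma posx_props:
  assumes x: "x \<in> S_complement n G"
  shows "\<forall>a\<in>{1..n}. posx n G x a \<in> {1..n}"
    and "\<forall>a\<in>{1..n}. \<forall>b\<in>{1..n}. posx n G x a < posx n G x b \<longleftrightarrow> x b < x a"
    and "\<forall>q\<in>{1..n}. \<exists>a\<in>{1..n}. posx n G x a = q"
proof -
  let ?w = "region_word n (connected_component_set (S_complement n G) x)"
  have w: "distinct ?w" "set ?w = {1..n}" "sorted_wrt (\<lambda>a b. x a > x b) ?w"
    using region_word_props[OF x] by auto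
  have len: "length ?w = n" using w distinct_card by fastforce
  have P: "posx n G x (?w ! k) = Suc k" if "k < n" for k
    using pos_nth[OF w(1)] len that unfolding posx_def by auto
  have ex: "\<exists>k<n. ?w ! k = a" if "a \<in> {1..n}" for a
    using that w(2) len by (metis in_set_conv_nth)
  show "\<forall>a\<in>{1..n}. posx n G x a \<in> {1..n}"
  proof
    fix a assume "a \<in> {1..n}"
    then obtain k where "k < n" "?w ! k = a" using ex by blast
    then show "posx n G x a \<in> {1..n}" using P by auto
  qed
  show "\<forall>q\<in>{1..n}. \<exists>a\<in>{1..n}. posx n G x a = q"
  proof
    fix q assume q: "q \<in> {1..n}"
    then have "q - 1 < n" by auto
    then have "posx n G x (?w ! (q - 1)) = q" using P q by auto
    moreover have "?w ! (q - 1) \<in> {1..n}" using \<open>q - 1 < n\<close> len w(2) nth_mem by metis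
    ultimately show "\<exists>a\<in>{1..n}. posx n G x a = q" by blast
  qed
  show "\<forall>a\<in>{1..n}. \<forall>b\<in>{1..n}. posx n G x a < posx n G x b \<longleftrightarrow> x b < x a"
  proof (intro ballI)
    fix a b assume a: "a \<in> {1..n}" and b: "b \<in> {1..n}"
    obtain ka where ka: "ka < n" "?w ! ka = a" using ex a by blast
    obtain kb where kb: "kb < n" "?w ! kb = b" using ex b by blast
    have so: "\<And>i j. i < j \<Longrightarrow> j < n \<Longrightarrow> x (?w ! i) > x (?w ! j)"
      using w(3) len by (auto simp: sorted_wrt_iff_nth_less)
    show "posx n G x a < posx n G x b \<longleftrightarrow> x b < x a"
    proof
      assume "posx n G x a < posx n G x b"
      then have "ka < kb" using P ka kb by auto
      then show "x b < x a" using so ka kb by blast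
    next
      assume h: "x b < x a"
      have "ka \<noteq> kb" using h ka kb by auto
      moreover have "\<not> kb < ka" using so ka kb h by fastforce
      ultimately show "posx n G x a < posx n G x b" using P ka kb by auto
    qed
  qed
qed

definition arcsx :: "nat \<Rightarrow> nat set set \<Rightarrow> (nat \<Rightarrow> real) \<Rightarrow> (nat \<times> nat) set" where
  "arcsx n G x = {(i, j). 1 \<le> i \<and> i < j \<and> j \<le> n \<and> {i, j} \<in> G \<and> x i - x j > 1}"

lemma region_arcs_eq:
  assumes x: "x \<in> S_complement n G"
  shows "region_arcs n G (connected_component_set (S_complement n G) x) = arcsx n G x"
proof -
  let ?R = "connected_component_set (S_complement n G) x"
  have xR: "x \<in> ?R" using x by simp
  have "\<forall>y\<in>?R. same_pat n G x y" using comp_pat by blast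
  then show ?thesis unfolding region_arcs_def arcsx_def same_pat_def using xR by blast
qed

definition Rm :: "(nat \<Rightarrow> nat) \<Rightarrow> (nat \<times> nat) set \<Rightarrow> (nat \<times> nat) set" where
  "Rm P A = {(i, l) \<in> A. \<not> (\<exists>(j, k) \<in> A. (j, k) \<noteq> (i, l) \<and> P i \<le> P j \<and> P k \<le> P l)}"

definition chn :: "(nat \<Rightarrow> nat) \<Rightarrow> (nat \<times> nat) set \<Rightarrow> nat \<Rightarrow> nat set" where
  "chn P A i = {k. (i, k) \<in> (Rm P A \<union> (Rm P A)\<inverse>)\<^sup>*}"

definition Sig :: "nat \<Rightarrow> (nat \<Rightarrow> nat) \<Rightarrow> (nat \<times> nat) set \<Rightarrow> nat \<Rightarrow> nat" where
  "Sig n P A = (\<lambda>i. if i \<in> {1..n} then P (ARG_MIN P k. k \<in> chn P A i) else 0)"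

lemma sigma_eq: "sigma_nG n G R = Sig n (pos (region_word n R)) (region_arcs n G R)"
  unfolding sigma_nG_def Sig_def chn_def region_chain_def remaining_arcs_def Rm_def Let_def by simp

lemma sigma_x:
  assumes x: "x \<in> S_complement n G"
  shows "sigma_nG n G (connected_component_set (S_complement n G) x) = Sig n (posx n G x) (arcsx n G x)"
  using sigma_eq region_arcs_eq[OF x] unfolding posx_def by simp

locale cfg =
  fixes n :: nat and P :: "nat \<Rightarrow> nat" and A :: "(nat \<times> nat) set"
  assumes P_range: "\<And>a. a \<in> {1..n} \<Longrightarrow> P a \<in> {1..n}"
    and P_inj: "inj_on P {1..n}"
    and A_sub: "\<And>i j. (i, j) \<in> A \<Longrightarrow> 1 \<le> i \<and> i < j \<and> j \<le> n \<and> P i < P j"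
begin

abbreviation "R \<equiv> Rm P A"
abbreviation "S \<equiv> R \<union> R\<inverse>"

lemma P_surj: "P ` {1..n} = {1..n}"
proof (rule endo_inj_surj)
  show "P ` {1..n} \<subseteq> {1..n}" using P_range by (rule image_subsetI)
qed (use P_inj in auto)

lemma P_eq: "a \<in> {1..n} \<Longrightarrow> b \<in> {1..n} \<Longrightarrow> P a = P b \<Longrightarrow> a = b"
  by (meson P_inj inj_onD)

lemma R_A: "(i, j) \<in> R \<Longrightarrow> (i, j) \<in> A" unfolding Rm_def by auto

lemma R_sub: "(i, j) \<in> R \<Longrightarrow> 1 \<le> i \<and> i < j \<and> j \<le> n \<and> P i < P j"
  using R_A A_sub by blast

lemma R_noin: "(i, l) \<in> R \<Longrightarrow> (j, k) \<in> A \<Longrightarrow> (j, k) \<noteq> (i, l) \<Longrightarrow> P i \<le> P j \<Longrightarrow> P k \<le> P l \<Longrightarrow> False"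
  unfolding Rm_def by blast

lemma out_unique: assumes "(a, b) \<in> R" "(a, c) \<in> R" shows "b = c"
proof (rule ccontr)
  assume ne: "b \<noteq> c"
  have "b \<in> {1..n}" "c \<in> {1..n}" using R_sub[OF assms(1)] R_sub[OF assms(2)] by auto
  then have "P b \<noteq> P c" using ne P_eq by blast
  then consider "P b < P c" | "P c < P b" by linarith
  then show False
  proof cases
    case 1 then show ?thesis using R_noin[OF assms(2) R_A[OF assms(1)]] ne by auto
  next
    case 2 then show ?thesis using R_noin[OF assms(1) R_A[OF assms(2)]] ne by auto
  qed
qed

lemma in_unique: assumes "(a, c) \<in> R" "(b, c) \<in> R" shows "a = b"
proof (rule ccontr)
  assume ne: "a \<noteq> b"
  have "a \<in> {1..n}" "b \<in> {1..n}" using R_sub[OF assms(1)] R_sub[OF assms(2)] by auto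
  then have "P a \<noteq> P b" using ne P_eq by blast
  then consider "P a < P b" | "P b < P a" by linarith
  then show False
  proof cases
    case 1 then show ?thesis using R_noin[OF assms(1) R_A[OF assms(2)]] ne by auto
  next
    case 2 then show ?thesis using R_noin[OF assms(2) R_A[OF assms(1)]] ne by auto
  qed
qed

lemma nonnest: assumes "(a, b) \<in> R" "(c, d) \<in> R" "P b < P d" shows "P a < P c"
proof (rule ccontr)
  assume "\<not> P a < P c"
  then have "P c \<le> P a" by simp
  moreover have "(a, b) \<noteq> (c, d)" using assms(3) by auto
  ultimately show False using R_noin[OF assms(2) R_A[OF assms(1)]] assms(3) by auto
qed

lemma rt_mono: "(a, b) \<in> R\<^sup>* \<Longrightarrow> a = b \<or> (a < b \<and> P a < P b \<and> a \<in> {1..n} \<and> b \<in> {1..n})"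
proof (induction rule: rtrancl_induct)
  case (step y z)
  then show ?case using R_sub[OF step(2)] by auto
qed simp

lemma L1: "(u, v) \<in> S\<^sup>* \<Longrightarrow> (u, v) \<in> R\<^sup>* \<or> (v, u) \<in> R\<^sup>*"
proof (induction rule: rtrancl_induct)
  case base then show ?case by simp
next
  case (step v w)
  from step(2) have "(v, w) \<in> R \<or> (w, v) \<in> R" by auto
  then show ?case
  proof
    assume vw: "(v, w) \<in> R"
    from step(3) show ?case
    proof
      assume "(u, v) \<in> R\<^sup>*" then show ?case using vw by auto
    next
      assume vu: "(v, u) \<in> R\<^sup>*"
      show ?case
      proof (cases "v = u")
        case True then show ?thesis using vw by auto
      next
        case False
        then obtain c where "(v, c) \<in> R" "(c, u) \<in> R\<^sup>*" using vu by (metis converse_rtranclE)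
        then have "c = w" using out_unique vw by blast
        then show ?thesis using \<open>(c, u) \<in> R\<^sup>*\<close> by auto
      qed
    qed
  next
    assume wv: "(w, v) \<in> R"
    from step(3) show ?case
    proof
      assume uv: "(u, v) \<in> R\<^sup>*"
      show ?case
      proof (cases "u = v")
        case True then show ?thesis using wv by auto
      next
        case False
        then obtain c where "(u, c) \<in> R\<^sup>*" "(c, v) \<in> R" using uv by (metis rtranclE)
        then have "c = w" using in_unique wv by blast
        then show ?thesis using \<open>(u, c) \<in> R\<^sup>*\<close> by auto
      qed
    next
      assume "(v, u) \<in> R\<^sup>*" then show ?case using wv by (meson converse_rtrancl_into_rtrancl)
    qed
  qed
qed

lemma S_sym: "(u, v) \<in> S\<^sup>* \<Longrightarrow> (v, u) \<in> S\<^sup>*"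
proof -
  have "sym S" by (auto simp: sym_def)
  then have "sym (S\<^sup>*)" by (rule sym_rtrancl)
  then show "(u, v) \<in> S\<^sup>* \<Longrightarrow> (v, u) \<in> S\<^sup>*" by (auto simp: sym_def)
qed

lemma chn_def': "chn P A i = {k. (i, k) \<in> S\<^sup>*}" unfolding chn_def by simp

lemma chn_self: "i \<in> chn P A i" unfolding chn_def by simp

lemma chn_sub: assumes "i \<in> {1..n}" shows "chn P A i \<subseteq> {1..n}"
proof
  fix k assume "k \<in> chn P A i"
  then have "(i, k) \<in> R\<^sup>* \<or> (k, i) \<in> R\<^sup>*" using L1 unfolding chn_def by blast
  then show "k \<in> {1..n}" using rt_mono assms by blast
qed

lemma chn_fin: "i \<in> {1..n} \<Longrightarrow> finite (chn P A i)"
  using chn_sub finite_subset by blast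

lemma chn_eq: assumes "k \<in> chn P A i" shows "chn P A k = chn P A i"
proof -
  have ik: "(i, k) \<in> S\<^sup>*" using assms unfolding chn_def by simp
  then have ki: "(k, i) \<in> S\<^sup>*" by (rule S_sym)
  show ?thesis unfolding chn_def'
    using ik ki rtrancl_trans[of i k S] rtrancl_trans[of k i S] by blast
qed

definition hd :: "nat \<Rightarrow> nat" where "hd i = (ARG_MIN P k. k \<in> chn P A i)"

lemma hd_props: "hd i \<in> chn P A i \<and> (\<forall>k\<in>chn P A i. P (hd i) \<le> P k)"
  unfolding hd_def using arg_min_nat_lemma[of "\<lambda>k. k \<in> chn P A i" i P] chn_self by blast

lemma Sig_hd: "i \<in> {1..n} \<Longrightarrow> Sig n P A i = P (hd i)"
  unfolding Sig_def hd_def by simp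

lemma hd_reach: assumes "i \<in> {1..n}" "k \<in> chn P A i" shows "(hd i, k) \<in> R\<^sup>*"
proof -
  have "chn P A (hd i) = chn P A i" using chn_eq hd_props by blast
  then have "(hd i, k) \<in> S\<^sup>*" using assms(2) unfolding chn_def by blast
  then have "(hd i, k) \<in> R\<^sup>* \<or> (k, hd i) \<in> R\<^sup>*" by (rule L1)
  then show ?thesis
  proof
    assume "(k, hd i) \<in> R\<^sup>*"
    then have "k = hd i \<or> P k < P (hd i)" using rt_mono by blast
    then show ?thesis using hd_props assms(2) by fastforce
  qed
qed

lemma hd_n: "i \<in> {1..n} \<Longrightarrow> hd i \<in> {1..n}" using hd_props chn_sub by blast

lemma Sig_eq_iff: assumes "i \<in> {1..n}" "j \<in> {1..n}"
  shows "Sig n P A i = Sig n P A j \<longleftrightarrow> j \<in> chn P A i"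
proof
  assume "Sig n P A i = Sig n P A j"
  then have "P (hd i) = P (hd j)" using Sig_hd assms by simp
  then have "hd i = hd j" using P_eq hd_n assms by blast
  moreover have "chn P A (hd i) = chn P A i" "chn P A (hd j) = chn P A j" using chn_eq hd_props by blast+
  ultimately show "j \<in> chn P A i" using chn_self by metis
next
  assume "j \<in> chn P A i"
  then have "chn P A j = chn P A i" by (rule chn_eq)
  then show "Sig n P A i = Sig n P A j" unfolding Sig_def using assms by simp
qed

lemma Sig_le: "i \<in> {1..n} \<Longrightarrow> Sig n P A i \<le> P i"
  using Sig_hd hd_props chn_self by simp

lemma Sig_range: "i \<in> {1..n} \<Longrightarrow> Sig n P A i \<in> {1..n}"
  using Sig_hd hd_n P_range by simp

lemma R_char: "(a, b) \<in> R \<longleftrightarrow> a \<in> {1..n} \<and> b \<in> {1..n} \<and> a < b \<and> Sig n P A a = Sig n P A b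
   \<and> (\<forall>c. a < c \<and> c < b \<longrightarrow> Sig n P A c \<noteq> Sig n P A a)"
proof
  assume ab: "(a, b) \<in> R"
  have ab': "a \<in> {1..n}" "b \<in> {1..n}" "a < b" using R_sub[OF ab] by auto
  have "b \<in> chn P A a" using ab unfolding chn_def by auto
  then have eq: "Sig n P A a = Sig n P A b" using Sig_eq_iff ab' by blast
  have "Sig n P A c \<noteq> Sig n P A a" if c: "a < c" "c < b" for c
  proof
    assume "Sig n P A c = Sig n P A a"
    moreover have cn: "c \<in> {1..n}" using c ab' by auto
    ultimately have "c \<in> chn P A a" using Sig_eq_iff ab' by metis
    then have "(a, c) \<in> R\<^sup>* \<or> (c, a) \<in> R\<^sup>*" using L1 unfolding chn_def by blast
    then show False
    proof
      assume "(c, a) \<in> R\<^sup>*" then show False using rt_mono c by fastforce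
    next
      assume ac: "(a, c) \<in> R\<^sup>*"
      then obtain c' where "(a, c') \<in> R" "(c', c) \<in> R\<^sup>*" using c by (metis converse_rtranclE less_irrefl)
      then have "c' = b" "(c', c) \<in> R\<^sup>*" using out_unique ab by auto
      then show False using rt_mono c by fastforce
    qed
  qed
  then show "a \<in> {1..n} \<and> b \<in> {1..n} \<and> a < b \<and> Sig n P A a = Sig n P A b
   \<and> (\<forall>c. a < c \<and> c < b \<longrightarrow> Sig n P A c \<noteq> Sig n P A a)" using ab' eq by blast
next
  assume h: "a \<in> {1..n} \<and> b \<in> {1..n} \<and> a < b \<and> Sig n P A a = Sig n P A b
   \<and> (\<forall>c. a < c \<and> c < b \<longrightarrow> Sig n P A c \<noteq> Sig n P A a)"
  then have "b \<in> chn P A a" using Sig_eq_iff by blast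
  then have "(a, b) \<in> R\<^sup>* \<or> (b, a) \<in> R\<^sup>*" using L1 unfolding chn_def by blast
  moreover have "(b, a) \<notin> R\<^sup>*" using rt_mono h by fastforce
  ultimately have ab: "(a, b) \<in> R\<^sup>*" by blast
  then obtain c' where c': "(a, c') \<in> R" "(c', b) \<in> R\<^sup>*" using h by (metis converse_rtranclE less_irrefl)
  have "c' \<le> b" using rt_mono c'(2) by fastforce
  have "a < c'" "c' \<in> {1..n}" using R_sub[OF c'(1)] by auto
  have "c' \<in> chn P A a" using c'(1) unfolding chn_def by auto
  then have "Sig n P A c' = Sig n P A a" using Sig_eq_iff h \<open>c' \<in> {1..n}\<close> by metis
  then have "c' = b" using h \<open>a < c'\<close> \<open>c' \<le> b\<close> by force
  then show "(a, b) \<in> R" using c' by simp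
qed

lemma head_iff: assumes "i \<in> {1..n}" shows "P i = Sig n P A i \<longleftrightarrow> (\<nexists>a. (a, i) \<in> R)"
proof
  assume "P i = Sig n P A i"
  then have "P i = P (hd i)" using Sig_hd assms by simp
  then have ih: "i = hd i" using P_eq hd_n assms by metis
  show "\<nexists>a. (a, i) \<in> R"
  proof
    assume "\<exists>a. (a, i) \<in> R"
    then obtain a where ai: "(a, i) \<in> R" by blast
    then have "a \<in> chn P A i" unfolding chn_def by auto
    then have "P (hd i) \<le> P a" using hd_props by blast
    then show False using R_sub[OF ai] ih by auto
  qed
next
  assume na: "\<nexists>a. (a, i) \<in> R"
  have "(hd i, i) \<in> R\<^sup>*" using hd_reach assms chn_self by blast
  then have "hd i = i" using na by (metis rtranclE)
  then show "P i = Sig n P A i" using Sig_hd assms by simp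
qed

lemma head_min: assumes "i \<in> {1..n}" "P i = Sig n P A i" "k \<in> {1..n}" "Sig n P A k = Sig n P A i"
  shows "i \<le> k"
proof -
  have "P i = P (hd i)" using Sig_hd assms by simp
  then have ih: "i = hd i" using P_eq hd_n assms by metis
  have "k \<in> chn P A i" using Sig_eq_iff assms by metis
  then have "(i, k) \<in> R\<^sup>*" using hd_reach assms ih by metis
  then show ?thesis using rt_mono by fastforce
qed

lemma dominate: "(i, l) \<in> A \<Longrightarrow> \<exists>j k. (j, k) \<in> R \<and> P i \<le> P j \<and> P k \<le> P l"
proof (induction "P l - P i" arbitrary: i l rule: less_induct)
  case less
  show ?case
  proof (cases "(i, l) \<in> R")
    case True then show ?thesis by blast
  next
    case False
    then obtain j k where jk: "(j, k) \<in> A" "(j, k) \<noteq> (i, l)" "P i \<le> P j" "P k \<le> P l"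
      using less.prems unfolding Rm_def by blast
    have il: "1 \<le> i \<and> i < l \<and> l \<le> n \<and> P i < P l" using A_sub less.prems by blast
    have jk': "1 \<le> j \<and> j < k \<and> k \<le> n \<and> P j < P k" using A_sub jk(1) by blast
    have "\<not> (P j = P i \<and> P k = P l)"
    proof
      assume h: "P j = P i \<and> P k = P l"
      have "i \<in> {1..n}" "j \<in> {1..n}" "k \<in> {1..n}" "l \<in> {1..n}" using il jk' by auto
      then have "j = i" "k = l" using h P_eq[of j i] P_eq[of k l] by auto
      then show False using jk(2) by simp
    qed
    then have "P k - P j < P l - P i" using jk(3,4) il jk' by presburger
    then obtain j' k' where "(j', k') \<in> R" "P j \<le> P j'" "P k' \<le> P k" using less.hyps jk(1) by blast
    then show ?thesis using jk by (meson order_trans)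
  qed
qed

end

context cfg begin

lemma card_P_le: assumes "j \<le> n" shows "card {i \<in> {1..n}. P i \<le> j} = j"
proof -
  have "P ` {i \<in> {1..n}. P i \<le> j} = {1..j}"
  proof
    show "P ` {i \<in> {1..n}. P i \<le> j} \<subseteq> {1..j}" using P_range by fastforce
  next
    show "{1..j} \<subseteq> P ` {i \<in> {1..n}. P i \<le> j}"
    proof
      fix q assume q: "q \<in> {1..j}"
      then have "q \<in> P ` {1..n}" using P_surj assms by auto
      then obtain i where "i \<in> {1..n}" "P i = q" by blast
      then show "q \<in> P ` {i \<in> {1..n}. P i \<le> j}" using q by auto
    qed
  qed
  moreover have "inj_on P {i \<in> {1..n}. P i \<le> j}" using P_inj by (rule inj_on_subset) auto
  ultimately show ?thesis using card_image by fastforce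
qed

lemma Sig_GPF:
  assumes AG: "\<And>i j. (i, j) \<in> A \<Longrightarrow> {i, j} \<in> G"
  shows "Sig n P A \<in> G_parking_functions n G"
proof -
  let ?f = "Sig n P A"
  have pf: "parking_function n ?f"
    unfolding parking_function_def
  proof (intro conjI ballI allI impI)
    fix i assume "i \<in> {1..n}" then show "?f i \<in> {1..n}" by (rule Sig_range)
  next
    fix i :: nat assume "i \<notin> {1..n}" then show "?f i = 0" unfolding Sig_def by auto
  next
    fix j assume j: "j \<in> {1..n}"
    have "{i \<in> {1..n}. P i \<le> j} \<subseteq> {i \<in> {1..n}. ?f i \<le> j}" using Sig_le by fastforce
    then have "card {i \<in> {1..n}. P i \<le> j} \<le> card {i \<in> {1..n}. ?f i \<le> j}"
      by (rule card_mono[rotated]) simp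
    then show "j \<le> card {i \<in> {1..n}. ?f i \<le> j}" using card_P_le j by simp
  qed
  have gc: "{i, LEAST j. i < j \<and> j \<le> n \<and> ?f i = ?f j} \<in> G"
    if i: "i \<in> {1..n}" and ex: "\<exists>j. i < j \<and> j \<le> n \<and> ?f i = ?f j" for i
  proof -
    define b where "b = (LEAST j. i < j \<and> j \<le> n \<and> ?f i = ?f j)"
    have b: "i < b \<and> b \<le> n \<and> ?f i = ?f b" unfolding b_def using ex by (rule LeastI_ex)
    have nb: "?f c \<noteq> ?f i" if "i < c" "c < b" for c
    proof
      assume "?f c = ?f i"
      then have "i < c \<and> c \<le> n \<and> ?f i = ?f c" using that b by simp
      then have "b \<le> c" unfolding b_def by (rule Least_le)
      then show False using that by simp
    qed
    have "(i, b) \<in> R" using R_char i b nb by auto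
    then have "(i, b) \<in> A" by (rule R_A)
    then show ?thesis using AG b_def by simp
  qed
  show ?thesis unfolding G_parking_functions_def using pf gc by blast
qed

end

lemma cfg_inj:
  assumes c1: "cfg n P A" and c2: "cfg n P' A'" and eq: "Sig n P A = Sig n P' A'"
  shows "\<forall>i\<in>{1..n}. P i = P' i"
proof (rule ccontr)
  assume "\<not> (\<forall>i\<in>{1..n}. P i = P' i)"
  then obtain i0 where "i0 \<in> {1..n}" "P i0 \<noteq> P' i0" by blast
  then have exq: "\<exists>q. \<exists>i\<in>{1..n}. P i = q \<and> P' i \<noteq> q" by (intro exI[of _ "P i0"]) auto
  define q where "q = (LEAST q. \<exists>i\<in>{1..n}. P i = q \<and> P' i \<noteq> q)"
  have "\<exists>i\<in>{1..n}. P i = q \<and> P' i \<noteq> q" unfolding q_def using exq by (rule LeastI_ex)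
  then obtain i where i: "i \<in> {1..n}" "P i = q" "P' i \<noteq> q" by blast
  have below: "P' j = P j" if "j \<in> {1..n}" "P j < q" for j
  proof (rule ccontr)
    assume "P' j \<noteq> P j"
    then have "q \<le> P j" unfolding q_def using that by (intro Least_le) auto
    then show False using that by simp
  qed
  have qn: "q \<in> {1..n}" using i cfg.P_range[OF c1] by auto
  obtain i' where i': "i' \<in> {1..n}" "P' i' = q" using cfg.P_surj[OF c2] qn by (metis imageE)
  have ii': "i \<noteq> i'" using i i' by auto
  have Pi': "P i' > q"
  proof -
    have "P i' \<noteq> q" using cfg.P_eq[OF c1, of i i'] i i' ii' by auto
    moreover have "\<not> P i' < q" using below[of i'] i' by auto
    ultimately show ?thesis by simp
  qed
  have P'i: "P' i > q"
  proof -
    have "\<not> P' i < q"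
    proof
      assume h: "P' i < q"
      have "P' i \<in> {1..n}" using cfg.P_range[OF c2] i by simp
      then obtain j where j: "j \<in> {1..n}" "P j = P' i" using cfg.P_surj[OF c1] by (metis imageE)
      then have "P' j = P' i" using below[of j] h by simp
      then have "j = i" using cfg.P_eq[OF c2, of j i] j i by simp
      then show False using j h i by simp
    qed
    then show ?thesis using i by simp
  qed
  let ?F = "Sig n P A"
  show False
  proof (cases "\<exists>j\<in>{1..n}. ?F j = q")
    case True
    then obtain j where j: "j \<in> {1..n}" "?F j = q" by blast
    have h1: "P i = ?F i"
    proof -
      have "?F j = P (cfg.hd P A j)" using cfg.Sig_hd[OF c1 j(1)] .
      then have "cfg.hd P A j = i" using cfg.P_eq[OF c1] cfg.hd_n[OF c1 j(1)] i j by metis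
      then have "i \<in> chn P A j" using cfg.hd_props[OF c1] by metis
      then have "?F j = ?F i" using cfg.Sig_eq_iff[OF c1 j(1) i(1)] by simp
      then show ?thesis using i j by simp
    qed
    have h2: "P' i' = ?F i'"
    proof -
      have "Sig n P' A' j = P' (cfg.hd P' A' j)" using cfg.Sig_hd[OF c2 j(1)] .
      then have "cfg.hd P' A' j = i'" using cfg.P_eq[OF c2] cfg.hd_n[OF c2 j(1)] i' j eq by metis
      then have "i' \<in> chn P' A' j" using cfg.hd_props[OF c2] by metis
      then have "Sig n P' A' j = Sig n P' A' i'" using cfg.Sig_eq_iff[OF c2 j(1) i'(1)] by simp
      then show ?thesis using i' j eq by simp
    qed
    have "i \<le> i'" using cfg.head_min[OF c1 i(1) h1 i'(1)] h1 h2 i i' by simp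
    moreover have "i' \<le> i" using cfg.head_min[OF c2 i'(1) _ i(1)] h1 h2 i i' eq by simp
    ultimately show False using ii' by simp
  next
    case False
    have "P i \<noteq> ?F i" using False i by auto
    then obtain a where a: "(a, i) \<in> Rm P A" using cfg.head_iff[OF c1 i(1)] by blast
    have "P' i' \<noteq> Sig n P' A' i'" using False i' eq by auto
    then obtain a' where a': "(a', i') \<in> Rm P' A'" using cfg.head_iff[OF c2 i'(1)] by blast
    have a2: "(a, i) \<in> Rm P' A'" unfolding cfg.R_char[OF c2] eq[symmetric]
      using a unfolding cfg.R_char[OF c1] .
    have a'1: "(a', i') \<in> Rm P A" unfolding cfg.R_char[OF c1] eq
      using a' unfolding cfg.R_char[OF c2] .
    have pa: "P a < q" "a \<in> {1..n}" using cfg.R_sub[OF c1 a] i by auto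
    have pa': "P' a' < q" "a' \<in> {1..n}" using cfg.R_sub[OF c2 a'] i' by auto
    have e1: "P' a = P a" using below pa by simp
    have e2: "P a' = P' a'"
    proof -
      have "P' a' \<in> {1..n}" using cfg.P_range[OF c2] pa' by simp
      then obtain j where j: "j \<in> {1..n}" "P j = P' a'" using cfg.P_surj[OF c1] by (metis imageE)
      then have "P' j = P' a'" using below[of j] pa' by simp
      then have "j = a'" using cfg.P_eq[OF c2, of j a'] j pa' by simp
      then show ?thesis using j by simp
    qed
    have "P a < P a'" using cfg.nonnest[OF c1 a a'1] i Pi' by simp
    moreover have "P' a' < P' a" using cfg.nonnest[OF c2 a' a2] i' P'i by simp
    ultimately show False using e1 e2 by simp
  qed
qed

locale pfn =
  fixes n :: nat and f :: "nat \<Rightarrow> nat"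
  assumes rng: "\<And>i. i \<in> {1..n} \<Longrightarrow> f i \<in> {1..n}"
    and park: "\<And>j. j \<in> {1..n} \<Longrightarrow> j \<le> card {i \<in> {1..n}. f i \<le> j}"
begin

definition hasS :: "nat \<Rightarrow> bool" where "hasS a \<longleftrightarrow> (\<exists>j. a < j \<and> j \<le> n \<and> f a = f j)"
definition sc :: "nat \<Rightarrow> nat" where "sc a = (LEAST j. a < j \<and> j \<le> n \<and> f a = f j)"
abbreviation "V \<equiv> f ` {1..n}"
definition hdv :: "nat \<Rightarrow> nat" where "hdv v = (LEAST j. 1 \<le> j \<and> j \<le> n \<and> f j = v)"

lemma sc_props: assumes "hasS a"
  shows "a < sc a \<and> sc a \<le> n \<and> f (sc a) = f a \<and> (\<forall>c. a < c \<and> c < sc a \<longrightarrow> f c \<noteq> f a)"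
proof -
  have 1: "a < sc a \<and> sc a \<le> n \<and> f a = f (sc a)"
    using assms unfolding hasS_def sc_def by (rule LeastI_ex)
  have "f c \<noteq> f a" if "a < c" "c < sc a" for c
  proof
    assume "f c = f a"
    then have "a < c \<and> c \<le> n \<and> f a = f c" using that 1 by simp
    then have "sc a \<le> c" unfolding sc_def by (rule Least_le)
    then show False using that by simp
  qed
  then show ?thesis using 1 by simp
qed

lemma sc_inj: assumes "hasS a" "hasS a'" "sc a = sc a'" shows "a = a'"
proof (rule ccontr)
  assume ne: "a \<noteq> a'"
  have A: "a < sc a" "f (sc a) = f a" "\<forall>c. a < c \<and> c < sc a \<longrightarrow> f c \<noteq> f a" using sc_props[OF assms(1)] by auto
  have B: "a' < sc a'" "f (sc a') = f a'" "\<forall>c. a' < c \<and> c < sc a' \<longrightarrow> f c \<noteq> f a'" using sc_props[OF assms(2)] by auto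
  have fa: "f a = f a'" using A B assms(3) by simp
  show False
  proof (cases "a < a'")
    case True then show ?thesis using A(3) B(1) assms(3) fa by auto
  next
    case False then have "a' < a" using ne by simp
    then show ?thesis using B(3) A(1) assms(3) fa by auto
  qed
qed

lemma hdv_props: assumes "v \<in> V"
  shows "hdv v \<in> {1..n} \<and> f (hdv v) = v \<and> (\<forall>j\<in>{1..n}. f j = v \<longrightarrow> hdv v \<le> j)"
proof -
  obtain j0 where j0: "j0 \<in> {1..n}" "f j0 = v" using assms by blast
  have 1: "1 \<le> hdv v \<and> hdv v \<le> n \<and> f (hdv v) = v"
    unfolding hdv_def by (rule LeastI[of _ j0]) (use j0 in auto)
  have "hdv v \<le> j" if "j \<in> {1..n}" "f j = v" for j
    unfolding hdv_def by (rule Least_le) (use that in auto)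
  then show ?thesis using 1 by auto
qed

lemma sc_not_hd: assumes "a \<in> {1..n}" "hasS a" "v \<in> V" shows "sc a \<noteq> hdv v"
proof
  assume h: "sc a = hdv v"
  have s: "a < sc a" "f (sc a) = f a" using sc_props[OF assms(2)] by auto
  have "f (hdv v) = v" using hdv_props[OF assms(3)] by simp
  then have "f a = v" using h s by simp
  then have "hdv v \<le> a" using hdv_props[OF assms(3)] assms(1) by blast
  then show False using h s by simp
qed

lemma sc_n: "hasS a \<Longrightarrow> sc a \<in> {1..n}" using sc_props[of a] by auto

definition Inv :: "nat \<Rightarrow> (nat \<Rightarrow> nat) \<Rightarrow> bool" where
  "Inv q e \<longleftrightarrow> (\<forall>u\<in>{1..q}. e u \<in> {1..n}) \<and> inj_on e {1..q}
    \<and> (\<forall>u\<in>{1..q}. u \<in> V \<longrightarrow> e u = hdv u)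
    \<and> (\<forall>u\<in>{1..q}. u \<notin> V \<longrightarrow> (\<exists>v. 1 \<le> v \<and> v < u \<and> hasS (e v) \<and> e u = sc (e v)))
    \<and> (\<forall>u u' v v'. 1 \<le> v \<and> v < u \<and> u < u' \<and> u' \<le> q \<and> 1 \<le> v' \<and> v' < u'
         \<and> hasS (e v) \<and> hasS (e v') \<and> e u = sc (e v) \<and> e u' = sc (e v') \<longrightarrow> v < v')
    \<and> (\<forall>v v'. 1 \<le> v' \<and> v' < v \<and> v \<le> q \<and> hasS (e v) \<and> hasS (e v')
         \<and> sc (e v) \<in> e ` {1..q} \<longrightarrow> sc (e v') \<in> e ` {1..q})
    \<and> (\<forall>u\<in>{1..q}. f (e u) \<le> u)"

lemma Inv0: "Inv 0 e" unfolding Inv_def by auto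

lemma exists_c:
  assumes inv: "Inv q e" and q: "Suc q \<le> n" and nV: "Suc q \<notin> V"
  shows "\<exists>v\<in>{1..q}. hasS (e v) \<and> sc (e v) \<notin> e ` {1..q}"
proof -
  have I1: "\<forall>u\<in>{1..q}. e u \<in> {1..n}" and Iinj: "inj_on e {1..q}"
    and I2: "\<forall>u\<in>{1..q}. u \<in> V \<longrightarrow> e u = hdv u" and I6: "\<forall>u\<in>{1..q}. f (e u) \<le> u"
    using inv unfolding Inv_def by auto
  let ?S = "e ` {1..q}"
  have cS: "card ?S = q" using card_image[OF Iinj] by simp
  have sub: "?S \<subseteq> {i \<in> {1..n}. f i \<le> q}" using I1 I6 by fastforce
  have eqset: "{i \<in> {1..n}. f i \<le> Suc q} = {i \<in> {1..n}. f i \<le> q}"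
  proof -
    have "f i \<noteq> Suc q" if "i \<in> {1..n}" for i using nV that by (metis image_eqI)
    then show ?thesis by (auto simp: le_Suc_eq)
  qed
  have "Suc q \<le> card {i \<in> {1..n}. f i \<le> q}" using park[of "Suc q"] q eqset by simp
  then have "\<not> {i \<in> {1..n}. f i \<le> q} \<subseteq> ?S"
    using cS card_mono[of ?S "{i \<in> {1..n}. f i \<le> q}"] by (metis finite_imageI finite_atLeastAtMost not_less_eq_eq)
  then obtain i where i: "i \<in> {1..n}" "f i \<le> q" "i \<notin> ?S" by blast
  have fi: "f i \<in> {1..q}" using rng[OF i(1)] i(2) by auto
  have fiV: "f i \<in> V" using i(1) by blast
  have "e (f i) = hdv (f i)" using I2 fi fiV by blast
  then have hS: "hdv (f i) \<in> ?S" using fi by (metis imageI)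
  have hle: "hdv (f i) \<le> i" using hdv_props[OF fiV] i(1) by blast
  have hlt: "hdv (f i) < i" using hle hS i(3) by (metis le_neq_implies_less)
  have hf: "f (hdv (f i)) = f i" using hdv_props[OF fiV] by simp
  let ?T = "{j \<in> ?S. j < i \<and> f j = f i}"
  have Tne: "hdv (f i) \<in> ?T" using hS hlt hf by simp
  have Tfin: "finite ?T" by simp
  define c where "c = Max ?T"
  have cT: "c \<in> ?T" unfolding c_def using Tne Tfin Max_in by blast
  have cmax: "\<And>j. j \<in> ?T \<Longrightarrow> j \<le> c" unfolding c_def using Tfin Max_ge by blast
  have hc: "hasS c" unfolding hasS_def using cT i(1) by (intro exI[of _ i]) auto
  have scle: "sc c \<le> i" unfolding sc_def using cT i(1) by (intro Least_le) auto
  have scp: "c < sc c" "f (sc c) = f c" using sc_props[OF hc] by auto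
  have "sc c \<notin> ?S"
  proof
    assume inS: "sc c \<in> ?S"
    show False
    proof (cases "sc c = i")
      case True then show ?thesis using inS i(3) by simp
    next
      case False
      then have "sc c \<in> ?T" using inS scle scp cT by simp
      then show False using cmax scp by fastforce
    qed
  qed
  moreover obtain v where "v \<in> {1..q}" "e v = c" using cT by blast
  ultimately show ?thesis using hc by blast
qed

lemma InvD: assumes "Inv q e"
  shows "(\<forall>u\<in>{1..q}. e u \<in> {1..n})" "inj_on e {1..q}"
    "(\<forall>u\<in>{1..q}. u \<in> V \<longrightarrow> e u = hdv u)"
    "(\<forall>u\<in>{1..q}. u \<notin> V \<longrightarrow> (\<exists>v. 1 \<le> v \<and> v < u \<and> hasS (e v) \<and> e u = sc (e v)))"
    "(\<forall>u u' v v'. 1 \<le> v \<and> v < u \<and> u < u' \<and> u' \<le> q \<and> 1 \<le> v' \<and> v' < u'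
         \<and> hasS (e v) \<and> hasS (e v') \<and> e u = sc (e v) \<and> e u' = sc (e v') \<longrightarrow> v < v')"
    "(\<forall>v v'. 1 \<le> v' \<and> v' < v \<and> v \<le> q \<and> hasS (e v) \<and> hasS (e v')
         \<and> sc (e v) \<in> e ` {1..q} \<longrightarrow> sc (e v') \<in> e ` {1..q})"
    "(\<forall>u\<in>{1..q}. f (e u) \<le> u)"
proof -
  note x = assms[unfolded Inv_def]
  show "(\<forall>u\<in>{1..q}. e u \<in> {1..n})" by (rule conjunct1[OF x])
  show "inj_on e {1..q}" by (rule conjunct1[OF conjunct2[OF x]])
  show "(\<forall>u\<in>{1..q}. u \<in> V \<longrightarrow> e u = hdv u)" by (rule conjunct1[OF conjunct2[OF conjunct2[OF x]]])
  show "(\<forall>u\<in>{1..q}. u \<notin> V \<longrightarrow> (\<exists>v. 1 \<le> v \<and> v < u \<and> hasS (e v) \<and> e u = sc (e v)))"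
    by (rule conjunct1[OF conjunct2[OF conjunct2[OF conjunct2[OF x]]]])
  show "(\<forall>u u' v v'. 1 \<le> v \<and> v < u \<and> u < u' \<and> u' \<le> q \<and> 1 \<le> v' \<and> v' < u'
         \<and> hasS (e v) \<and> hasS (e v') \<and> e u = sc (e v) \<and> e u' = sc (e v') \<longrightarrow> v < v')"
    by (rule conjunct1[OF conjunct2[OF conjunct2[OF conjunct2[OF conjunct2[OF x]]]]])
  show "(\<forall>v v'. 1 \<le> v' \<and> v' < v \<and> v \<le> q \<and> hasS (e v) \<and> hasS (e v')
         \<and> sc (e v) \<in> e ` {1..q} \<longrightarrow> sc (e v') \<in> e ` {1..q})"
    by (rule conjunct1[OF conjunct2[OF conjunct2[OF conjunct2[OF conjunct2[OF conjunct2[OF x]]]]]])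
  show "(\<forall>u\<in>{1..q}. f (e u) \<le> u)"
    by (rule conjunct2[OF conjunct2[OF conjunct2[OF conjunct2[OF conjunct2[OF conjunct2[OF x]]]]]])
qed

lemma step_head:
  assumes inv: "Inv q e" and q: "Suc q \<le> n" and inV: "Suc q \<in> V"
  shows "Inv (Suc q) (e(Suc q := hdv (Suc q)))"
proof -
  note I1 = InvD(1)[OF inv] and Iinj = InvD(2)[OF inv] and I2 = InvD(3)[OF inv]
    and I3 = InvD(4)[OF inv] and I4 = InvD(5)[OF inv] and I5 = InvD(6)[OF inv] and I6 = InvD(7)[OF inv]
  define h where "h = hdv (Suc q)"
  define e' where "e' = e(Suc q := h)"
  have hp: "h \<in> {1..n}" "f h = Suc q" using hdv_props[OF inV] h_def by auto
  have hnS: "h \<notin> e ` {1..q}"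
  proof
    assume "h \<in> e ` {1..q}"
    then obtain u where "u \<in> {1..q}" "e u = h" by blast
    then show False using I6 hp by fastforce
  qed
  have agree: "\<And>u. u \<in> {1..q} \<Longrightarrow> e' u = e u" unfolding e'_def by auto
  have e'q: "e' (Suc q) = h" unfolding e'_def by simp
  have img: "e' ` {1..Suc q} = insert h (e ` {1..q})"
  proof -
    have "{1..Suc q} = insert (Suc q) {1..q}" by auto
    then have "e' ` {1..Suc q} = insert (e' (Suc q)) (e' ` {1..q})" by simp
    moreover have "e' ` {1..q} = e ` {1..q}" using agree by (rule image_cong[OF refl])
    ultimately show ?thesis using e'q by simp
  qed
  have ran: "e v \<in> {1..n}" if "v \<in> {1..q}" for v using I1 that by blast
  have J1: "\<forall>u\<in>{1..Suc q}. e' u \<in> {1..n}" using I1 agree e'q hp by (auto simp: le_Suc_eq)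
  have J2: "inj_on e' {1..Suc q}"
  proof -
    have "inj_on e' {1..q}" using Iinj agree inj_on_cong by blast
    moreover have "e' ` {1..q} = e ` {1..q}" using agree by (rule image_cong[OF refl])
    then have "e' (Suc q) \<notin> e' ` {1..q}" using hnS e'q by simp
    moreover have "{1..Suc q} = insert (Suc q) {1..q}" by auto
    ultimately show ?thesis by simp
  qed
  have J3: "\<forall>u\<in>{1..Suc q}. u \<in> V \<longrightarrow> e' u = hdv u"
    using I2 agree e'q h_def by (auto simp: le_Suc_eq)
  have J4: "\<forall>u\<in>{1..Suc q}. u \<notin> V \<longrightarrow> (\<exists>v. 1 \<le> v \<and> v < u \<and> hasS (e' v) \<and> e' u = sc (e' v))"
  proof (intro ballI impI)
    fix u assume u: "u \<in> {1..Suc q}" "u \<notin> V"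
    then have "u \<in> {1..q}" using inV by (auto simp: le_Suc_eq)
    then obtain v where "1 \<le> v \<and> v < u \<and> hasS (e v) \<and> e u = sc (e v)" using I3 u by blast
    moreover have "v \<in> {1..q}" "u \<in> {1..q}" using calculation \<open>u \<in> {1..q}\<close> by auto
    ultimately show "\<exists>v. 1 \<le> v \<and> v < u \<and> hasS (e' v) \<and> e' u = sc (e' v)" using agree by metis
  qed
  have J5: "\<forall>u u' v v'. 1 \<le> v \<and> v < u \<and> u < u' \<and> u' \<le> Suc q \<and> 1 \<le> v' \<and> v' < u'
         \<and> hasS (e' v) \<and> hasS (e' v') \<and> e' u = sc (e' v) \<and> e' u' = sc (e' v') \<longrightarrow> v < v'"
  proof (intro allI impI)
    fix u u' v v'
    assume a: "1 \<le> v \<and> v < u \<and> u < u' \<and> u' \<le> Suc q \<and> 1 \<le> v' \<and> v' < u'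
         \<and> hasS (e' v) \<and> hasS (e' v') \<and> e' u = sc (e' v) \<and> e' u' = sc (e' v')"
    show "v < v'"
    proof (cases "u' = Suc q")
      case True
      have "v' \<in> {1..q}" using a True by auto
      then have "e' v' \<in> {1..n}" using ran agree by simp
      then have "sc (e' v') \<noteq> hdv (Suc q)" using sc_not_hd a inV by blast
      then show ?thesis using a True e'q h_def by simp
    next
      case False
      then have r: "u' \<le> q" using a by simp
      have "v \<in> {1..q}" "v' \<in> {1..q}" "u \<in> {1..q}" "u' \<in> {1..q}" using a r by auto
      then have ev: "e' v = e v" "e' v' = e v'" "e' u = e u" "e' u' = e u'" using agree by auto
      have c: "1 \<le> v \<and> v < u \<and> u < u' \<and> u' \<le> q \<and> 1 \<le> v' \<and> v' < u'
         \<and> hasS (e v) \<and> hasS (e v') \<and> e u = sc (e v) \<and> e u' = sc (e v')"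
        using a r unfolding ev by blast
      show ?thesis by (rule I4[rule_format, OF c])
    qed
  qed
  have J6: "\<forall>v v'. 1 \<le> v' \<and> v' < v \<and> v \<le> Suc q \<and> hasS (e' v) \<and> hasS (e' v')
         \<and> sc (e' v) \<in> e' ` {1..Suc q} \<longrightarrow> sc (e' v') \<in> e' ` {1..Suc q}"
  proof (intro allI impI)
    fix v v'
    assume a: "1 \<le> v' \<and> v' < v \<and> v \<le> Suc q \<and> hasS (e' v) \<and> hasS (e' v')
         \<and> sc (e' v) \<in> e' ` {1..Suc q}"
    show "sc (e' v') \<in> e' ` {1..Suc q}"
    proof (cases "v = Suc q")
      case True
      then have hs: "hasS h" "sc h \<in> insert h (e ` {1..q})" using a e'q img by auto
      have "sc h \<noteq> h" using sc_props[OF hs(1)] by simp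
      then have "sc h \<in> e ` {1..q}" using hs by simp
      then obtain u where u: "u \<in> {1..q}" "e u = sc h" by (metis imageE)
      have "f (sc h) = Suc q" using sc_props[OF hs(1)] hp by simp
      then show ?thesis using I6 u by fastforce
    next
      case False
      then have vq: "v \<in> {1..q}" "v' \<in> {1..q}" using a by auto
      then have ev: "e' v = e v" "e' v' = e v'" using agree by auto
      have "e v \<in> {1..n}" using ran vq by simp
      then have "sc (e v) \<noteq> h" using sc_not_hd a inV ev h_def by metis
      then have "sc (e v) \<in> e ` {1..q}" using a ev img by auto
      then have "sc (e v') \<in> e ` {1..q}" using I5 a ev vq by auto
      then show ?thesis using img ev by auto
    qed
  qed
  have J7: "\<forall>u\<in>{1..Suc q}. f (e' u) \<le> u"
    using I6 agree e'q hp by (auto simp: le_Suc_eq)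
  show ?thesis unfolding Inv_def e'_def[symmetric] h_def[symmetric]
    using J1 J2 J3 J4 J5 J6 J7 by blast
qed


lemma step_nonhead:
  assumes inv: "Inv q e" and q: "Suc q \<le> n" and nV: "Suc q \<notin> V"
  shows "\<exists>e'. Inv (Suc q) e'"
proof -
  note I1 = InvD(1)[OF inv] and Iinj = InvD(2)[OF inv] and I2 = InvD(3)[OF inv]
    and I3 = InvD(4)[OF inv] and I4 = InvD(5)[OF inv] and I5 = InvD(6)[OF inv] and I6 = InvD(7)[OF inv]
  let ?Q = "\<lambda>v. v \<in> {1..q} \<and> hasS (e v) \<and> sc (e v) \<notin> e ` {1..q}"
  have exQ: "\<exists>v. ?Q v" using exists_c[OF inv q nV] by blast
  define v where "v = (LEAST v. ?Q v)"
  have Qv: "?Q v" unfolding v_def using exQ by (rule LeastI_ex)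
  have vmin: "\<And>w. ?Q w \<Longrightarrow> v \<le> w" unfolding v_def by (rule Least_le)
  define b where "b = sc (e v)"
  define e' where "e' = e(Suc q := b)"
  have hv: "hasS (e v)" "v \<in> {1..q}" using Qv by auto
  have ev_n: "e v \<in> {1..n}" using I1 hv by blast
  have bp: "b \<in> {1..n}" "f b = f (e v)" "e v < b" using sc_props[OF hv(1)] sc_n[OF hv(1)] b_def by auto
  have bnS: "b \<notin> e ` {1..q}" using Qv b_def by simp
  have agree: "\<And>u. u \<in> {1..q} \<Longrightarrow> e' u = e u" unfolding e'_def by auto
  have e'q: "e' (Suc q) = b" unfolding e'_def by simp
  have imgq: "e' ` {1..q} = e ` {1..q}" using agree by (rule image_cong[OF refl])
  have img: "e' ` {1..Suc q} = insert b (e ` {1..q})"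
  proof -
    have "{1..Suc q} = insert (Suc q) {1..q}" by auto
    then have "e' ` {1..Suc q} = insert (e' (Suc q)) (e' ` {1..q})" by simp
    then show ?thesis using e'q imgq by simp
  qed
  have ran: "e w \<in> {1..n}" if "w \<in> {1..q}" for w using I1 that by blast
  have J1: "\<forall>u\<in>{1..Suc q}. e' u \<in> {1..n}"
  proof
    fix u assume "u \<in> {1..Suc q}"
    then consider "u \<in> {1..q}" | "u = Suc q" by (auto simp: le_Suc_eq)
    then show "e' u \<in> {1..n}" using agree ran e'q bp by cases auto
  qed
  have J2: "inj_on e' {1..Suc q}"
  proof -
    have "inj_on e' {1..q}" using Iinj agree inj_on_cong by blast
    moreover have "e' (Suc q) \<notin> e' ` {1..q}" using bnS e'q imgq by simp
    moreover have "{1..Suc q} = insert (Suc q) {1..q}" by auto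
    ultimately show ?thesis by simp
  qed
  have J3: "\<forall>u\<in>{1..Suc q}. u \<in> V \<longrightarrow> e' u = hdv u"
  proof (intro ballI impI)
    fix u assume u: "u \<in> {1..Suc q}" "u \<in> V"
    have "u \<noteq> Suc q" using u nV by blast
    then have "u \<in> {1..q}" using u by (auto simp: le_Suc_eq)
    then show "e' u = hdv u" using I2 u agree by simp
  qed
  have J4: "\<forall>u\<in>{1..Suc q}. u \<notin> V \<longrightarrow> (\<exists>w. 1 \<le> w \<and> w < u \<and> hasS (e' w) \<and> e' u = sc (e' w))"
  proof (intro ballI impI)
    fix u assume u: "u \<in> {1..Suc q}" "u \<notin> V"
    show "\<exists>w. 1 \<le> w \<and> w < u \<and> hasS (e' w) \<and> e' u = sc (e' w)"
    proof (cases "u = Suc q")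
      case True
      have "e' v = e v" using agree hv by simp
      then show ?thesis using True hv e'q b_def by (intro exI[of _ v]) auto
    next
      case False
      then have uq: "u \<in> {1..q}" using u by (auto simp: le_Suc_eq)
      then obtain w where w: "1 \<le> w \<and> w < u \<and> hasS (e w) \<and> e u = sc (e w)" using I3 u by blast
      then have "w \<in> {1..q}" using uq by auto
      then show ?thesis using w agree uq by (intro exI[of _ w]) auto
    qed
  qed
  have J5: "\<forall>u u' w w'. 1 \<le> w \<and> w < u \<and> u < u' \<and> u' \<le> Suc q \<and> 1 \<le> w' \<and> w' < u'
         \<and> hasS (e' w) \<and> hasS (e' w') \<and> e' u = sc (e' w) \<and> e' u' = sc (e' w') \<longrightarrow> w < w'"
  proof (intro allI impI)
    fix u u' w w'
    assume a: "1 \<le> w \<and> w < u \<and> u < u' \<and> u' \<le> Suc q \<and> 1 \<le> w' \<and> w' < u'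
         \<and> hasS (e' w) \<and> hasS (e' w') \<and> e' u = sc (e' w) \<and> e' u' = sc (e' w')"
    show "w < w'"
    proof (cases "u' = Suc q")
      case True
      have wq: "w' \<in> {1..q}" "w \<in> {1..q}" "u \<in> {1..q}" using a True by auto
      then have ew: "e' w' = e w'" "e' w = e w" "e' u = e u" using agree by auto
      have "sc (e w') = sc (e v)" using a True e'q b_def ew by simp
      then have "e w' = e v" using sc_inj a hv ew by metis
      then have w'v: "w' = v" using Iinj wq hv by (metis inj_onD)
      have hw: "hasS (e w)" and eu: "e u = sc (e w)" using a ew by auto
      have inS: "sc (e w) \<in> e ` {1..q}" using eu wq by (metis imageI)
      have "\<not> v < w"
      proof
        assume "v < w"
        then have c: "1 \<le> v \<and> v < w \<and> w \<le> q \<and> hasS (e w) \<and> hasS (e v) \<and> sc (e w) \<in> e ` {1..q}"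
          using hv hw inS wq by auto
        have "sc (e v) \<in> e ` {1..q}" by (rule I5[rule_format, OF c])
        then show False using Qv by simp
      qed
      moreover have "w \<noteq> v" using inS Qv by auto
      ultimately show ?thesis using w'v by simp
    next
      case False
      then have r: "u' \<le> q" using a by simp
      have "w \<in> {1..q}" "w' \<in> {1..q}" "u \<in> {1..q}" "u' \<in> {1..q}" using a r by auto
      then have ev: "e' w = e w" "e' w' = e w'" "e' u = e u" "e' u' = e u'" using agree by auto
      have c: "1 \<le> w \<and> w < u \<and> u < u' \<and> u' \<le> q \<and> 1 \<le> w' \<and> w' < u'
         \<and> hasS (e w) \<and> hasS (e w') \<and> e u = sc (e w) \<and> e u' = sc (e w')"
        using a r unfolding ev by blast
      show ?thesis by (rule I4[rule_format, OF c])
    qed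
  qed
  have J6: "\<forall>w w'. 1 \<le> w' \<and> w' < w \<and> w \<le> Suc q \<and> hasS (e' w) \<and> hasS (e' w')
         \<and> sc (e' w) \<in> e' ` {1..Suc q} \<longrightarrow> sc (e' w') \<in> e' ` {1..Suc q}"
  proof (intro allI impI)
    fix w w'
    assume a: "1 \<le> w' \<and> w' < w \<and> w \<le> Suc q \<and> hasS (e' w) \<and> hasS (e' w')
         \<and> sc (e' w) \<in> e' ` {1..Suc q}"
    show "sc (e' w') \<in> e' ` {1..Suc q}"
    proof (cases "w = Suc q")
      case True
      then have hs: "hasS b" "sc b \<in> insert b (e ` {1..q})" using a e'q img by auto
      have "b < sc b" using sc_props[OF hs(1)] by simp
      then have "sc b \<in> e ` {1..q}" using hs by auto
      then obtain u where u: "u \<in> {1..q}" "e u = sc b" by (metis imageE)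
      have "u \<notin> V"
      proof
        assume "u \<in> V"
        then have "e u = hdv u" using I2 u by blast
        then show False using sc_not_hd[OF bp(1) hs(1) \<open>u \<in> V\<close>] u by simp
      qed
      then obtain w0 where w0: "1 \<le> w0 \<and> w0 < u \<and> hasS (e w0) \<and> e u = sc (e w0)" using I3 u by blast
      then have "e w0 = b" using sc_inj hs(1) u by metis
      moreover have "w0 \<in> {1..q}" using w0 u by auto
      ultimately show ?thesis using bnS by (metis imageI)
    next
      case False
      then have wq: "w \<in> {1..q}" "w' \<in> {1..q}" using a by auto
      then have ew: "e' w = e w" "e' w' = e w'" using agree by auto
      have hw: "hasS (e w)" "hasS (e w')" using a ew by auto
      have "sc (e w) \<in> insert b (e ` {1..q})" using a ew img by simp
      then consider "sc (e w) = b" | "sc (e w) \<in> e ` {1..q}" by blast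
      then have "sc (e w') \<in> e ` {1..q}"
      proof cases
        case 1
        then have "e w = e v" using sc_inj hw hv b_def by metis
        then have "w = v" using Iinj wq hv by (metis inj_onD)
        then have "\<not> ?Q w'" using vmin a by (metis not_le)
        then show ?thesis using wq hw by blast
      next
        case 2
        then have c: "1 \<le> w' \<and> w' < w \<and> w \<le> q \<and> hasS (e w) \<and> hasS (e w') \<and> sc (e w) \<in> e ` {1..q}"
          using a hw wq by auto
        show ?thesis by (rule I5[rule_format, OF c])
      qed
      then show ?thesis using img ew by auto
    qed
  qed
  have J7: "\<forall>u\<in>{1..Suc q}. f (e' u) \<le> u"
  proof
    fix u assume "u \<in> {1..Suc q}"
    then consider "u \<in> {1..q}" | "u = Suc q" by (auto simp: le_Suc_eq)
    then show "f (e' u) \<le> u"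
    proof cases
      case 1 then show ?thesis using I6 agree by simp
    next
      case 2
      have "f (e v) \<le> v" using I6 hv by blast
      then show ?thesis using 2 e'q bp hv by simp
    qed
  qed
  have "Inv (Suc q) e'" unfolding Inv_def using J1 J2 J3 J4 J5 J6 J7 by blast
  then show ?thesis by blast
qed

lemma Inv_exists: "q \<le> n \<Longrightarrow> \<exists>e. Inv q e"
proof (induction q)
  case 0 then show ?case using Inv0 by blast
next
  case (Suc q)
  then obtain e where e: "Inv q e" by auto
  show ?case
  proof (cases "Suc q \<in> V")
    case True then show ?thesis using step_head[OF e Suc.prems] by blast
  next
    case False then show ?thesis using step_nonhead[OF e Suc.prems] by blast
  qed
qed


end

lemma realize:
  fixes U :: "nat \<Rightarrow> nat \<Rightarrow> bool"
  assumes up: "\<And>u v u' v'. U u v \<Longrightarrow> u' \<le> u \<Longrightarrow> v \<le> v' \<Longrightarrow> U u' v'"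
  shows "\<exists>t::nat \<Rightarrow> real. \<forall>u v. 1 \<le> u \<and> u < v \<and> v \<le> m \<longrightarrow>
           t u < t v \<and> (U u v \<longrightarrow> t v - t u > 1) \<and> (\<not> U u v \<longrightarrow> t v - t u < 1)"
proof (induction m)
  case 0 show ?case by auto
next
  case (Suc m)
  then obtain t :: "nat \<Rightarrow> real" where t: "\<And>u v. 1 \<le> u \<Longrightarrow> u < v \<Longrightarrow> v \<le> m \<Longrightarrow>
           t u < t v \<and> (U u v \<longrightarrow> t v - t u > 1) \<and> (\<not> U u v \<longrightarrow> t v - t u < 1)" by blast
  have mono: "t u \<le> t w" if "1 \<le> u" "u \<le> w" "w \<le> m" for u w
  proof (cases "u = w")
    case False then show ?thesis using t[of u w] that by fastforce
  qed simp
  define GG where "GG = {u \<in> {1..m}. U u (Suc m)}"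
  define g where "g = (if GG = {} then 0 else Max GG)"
  have gm: "g \<le> m" unfolding g_def GG_def by (auto intro!: Max.boundedI)
  have gU: "U u (Suc m) \<longleftrightarrow> u \<le> g" if "u \<in> {1..m}" for u
  proof
    assume "U u (Suc m)"
    then have "u \<in> GG" using that GG_def by simp
    then show "u \<le> g" unfolding g_def using Max_ge[of GG u] GG_def by auto
  next
    assume ug: "u \<le> g"
    then have "GG \<noteq> {}" using that g_def by (metis atLeastAtMost_iff le_zero_eq not_one_le_zero)
    then have "g \<in> GG" unfolding g_def using Max_in[of GG] GG_def by simp
    then have "U g (Suc m)" unfolding GG_def by simp
    then show "U u (Suc m)" using up ug by blast
  qed
  define val where "val = (if g = m then t m + 2
      else ((if g = 0 then t m else max (t m) (t g + 1)) + (t (Suc g) + 1)) / 2)"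
  define t' where "t' = t(Suc m := val)"
  have key: "t u < val \<and> (U u (Suc m) \<longrightarrow> val - t u > 1) \<and> (\<not> U u (Suc m) \<longrightarrow> val - t u < 1)"
    if u: "1 \<le> u" "u \<le> m" for u
  proof (cases "g = m")
    case True
    have "t u \<le> t m" using mono u by simp
    moreover have "U u (Suc m)" using gU u True by simp
    ultimately show ?thesis using True val_def by simp
  next
    case False
    then have gl: "g < m" using gm by simp
    define lo where "lo = (if g = 0 then t m else max (t m) (t g + 1))"
    define hi where "hi = t (Suc g) + 1"
    have v: "val = (lo + hi) / 2" unfolding val_def lo_def hi_def using False by simp
    have lo1: "t m \<le> lo" unfolding lo_def by simp
    have lohi: "lo < hi"
    proof -
      have "t m < t (Suc g) + 1"
      proof (cases "Suc g = m")
        case False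
        then have sl: "Suc g < m" using gl by simp
        have "\<not> U (Suc g) m"
        proof
          assume "U (Suc g) m"
          then have "U (Suc g) (Suc m)" using up by fastforce
          then show False using gU[of "Suc g"] sl by simp
        qed
        then show ?thesis using t[of "Suc g" m] sl by simp
      qed simp
      moreover have "g \<noteq> 0 \<Longrightarrow> t g + 1 < t (Suc g) + 1" using t[of g "Suc g"] gl by simp
      ultimately show ?thesis unfolding lo_def hi_def by auto
    qed
    have tu: "t u \<le> t m" using mono u by simp
    show ?thesis
    proof (intro conjI impI)
      show "t u < val" using v lo1 lohi tu by simp
    next
      assume "U u (Suc m)"
      then have ug: "u \<le> g" using gU u by simp
      then have "g \<noteq> 0" using u by simp
      then have "t g + 1 \<le> lo" unfolding lo_def by simp
      moreover have "t u \<le> t g" using mono u ug gl by simp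
      ultimately show "val - t u > 1" using v lohi by simp
    next
      assume "\<not> U u (Suc m)"
      then have ug: "g < u" using gU u by simp
      then have "t (Suc g) \<le> t u" using mono u by simp
      then show "val - t u < 1" using v lohi unfolding hi_def by simp
    qed
  qed
  have "\<forall>u v. 1 \<le> u \<and> u < v \<and> v \<le> Suc m \<longrightarrow>
           t' u < t' v \<and> (U u v \<longrightarrow> t' v - t' u > 1) \<and> (\<not> U u v \<longrightarrow> t' v - t' u < 1)"
  proof (intro allI impI)
    fix u v assume a: "1 \<le> u \<and> u < v \<and> v \<le> Suc m"
    show "t' u < t' v \<and> (U u v \<longrightarrow> t' v - t' u > 1) \<and> (\<not> U u v \<longrightarrow> t' v - t' u < 1)"
    proof (cases "v = Suc m")
      case True
      have "t' u = t u" "t' v = val" using a True unfolding t'_def by auto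
      then show ?thesis using key[of u] a True by simp
    next
      case False
      then have "t' u = t u" "t' v = t v" using a unfolding t'_def by auto
      then show ?thesis using t[of u v] a False by simp
    qed
  qed
  then show ?case by blast
qed

lemma order_iso_eq:
  assumes c1: "cfg n p {}" and c2: "cfg n p' {}"
    and ord: "\<And>a b. a \<in> {1..n} \<Longrightarrow> b \<in> {1..n} \<Longrightarrow> p a < p b \<longleftrightarrow> p' a < p' b"
    and a: "a \<in> {1..n}"
  shows "p a = p' a"
proof -
  have "{i \<in> {1..n}. p i \<le> p a} = {i \<in> {1..n}. p' i \<le> p' a}"
    using ord a by (auto simp: not_less[symmetric])
  moreover have "card {i \<in> {1..n}. p i \<le> p a} = p a"
    using cfg.card_P_le[OF c1] cfg.P_range[OF c1 a] by simp
  moreover have "card {i \<in> {1..n}. p' i \<le> p' a} = p' a"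
    using cfg.card_P_le[OF c2] cfg.P_range[OF c2 a] by simp
  ultimately show ?thesis by simp
qed

lemma arg_min_cong': assumes "\<And>x. Q x \<Longrightarrow> f x = g x" shows "arg_min f Q = arg_min g Q"
proof -
  have "\<And>x. is_arg_min f Q x = is_arg_min g Q x" unfolding is_arg_min_def using assms by auto
  then have "is_arg_min f Q = is_arg_min g Q" by (rule ext)
  then show ?thesis unfolding arg_min_def by (simp only:)
qed

lemma rt_in: "(i, k) \<in> (Rm P A \<union> (Rm P A)\<inverse>)\<^sup>* \<Longrightarrow> A \<subseteq> {1..n} \<times> {1..n} \<Longrightarrow> k = i \<or> k \<in> {1..n}"
proof (induction rule: rtrancl_induct)
  case (step y z)
  have "Rm P A \<subseteq> A" unfolding Rm_def by auto
  then show ?case using step by auto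
qed simp

lemma Sig_cong:
  assumes eq: "\<And>a. a \<in> {1..n} \<Longrightarrow> P a = P' a" and A: "A \<subseteq> {1..n} \<times> {1..n}"
  shows "Sig n P A = Sig n P' A"
proof -
  have R: "Rm P A = Rm P' A"
  proof -
    have "\<And>i l j k. (i, l) \<in> A \<Longrightarrow> (j, k) \<in> A \<Longrightarrow> (P i \<le> P j \<and> P k \<le> P l) = (P' i \<le> P' j \<and> P' k \<le> P' l)"
      using A eq by (metis SigmaD1 SigmaD2 subsetD)
    then show ?thesis unfolding Rm_def by blast
  qed
  have C: "chn P A = chn P' A" unfolding chn_def R by simp
  show ?thesis
  proof
    fix i show "Sig n P A i = Sig n P' A i"
    proof (cases "i \<in> {1..n}")
      case True
      have sub: "\<And>k. k \<in> chn P A i \<Longrightarrow> k \<in> {1..n}" using rt_in[OF _ A] True unfolding chn_def by blast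
      have am: "arg_min P (\<lambda>k. k \<in> chn P A i) = arg_min P' (\<lambda>k. k \<in> chn P A i)"
        by (rule arg_min_cong') (use sub eq in auto)
      have "arg_min P (\<lambda>k. k \<in> chn P A i) \<in> chn P A i"
        using arg_min_nat_lemma[of "\<lambda>k. k \<in> chn P A i" i P] chn_def by auto
      then have "P (arg_min P (\<lambda>k. k \<in> chn P A i)) = P' (arg_min P (\<lambda>k. k \<in> chn P A i))" using sub eq by blast
      then show ?thesis unfolding Sig_def C[symmetric] using True am by simp
    qed (auto simp: Sig_def)
  qed
qed

context pfn begin

lemma P_exists: "\<exists>P. (\<forall>a\<in>{1..n}. P a \<in> {1..n}) \<and> inj_on P {1..n}
   \<and> (\<forall>v\<in>V. P (hdv v) = v)
   \<and> (\<forall>a\<in>{1..n}. hasS a \<longrightarrow> P a < P (sc a))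
   \<and> (\<forall>a\<in>{1..n}. \<forall>a'\<in>{1..n}. hasS a \<and> hasS a' \<and> P (sc a) < P (sc a') \<longrightarrow> P a < P a')
   \<and> (\<forall>a\<in>{1..n}. f a \<le> P a)"
proof -
  obtain e where inv: "Inv n e" using Inv_exists by blast
  note I1 = InvD(1)[OF inv] and Iinj = InvD(2)[OF inv] and I2 = InvD(3)[OF inv]
    and I3 = InvD(4)[OF inv] and I4 = InvD(5)[OF inv] and I6 = InvD(7)[OF inv]
  have img: "e ` {1..n} = {1..n}"
  proof (rule endo_inj_surj)
    show "e ` {1..n} \<subseteq> {1..n}" using I1 by blast
  qed (use Iinj in auto)
  then have bij: "bij_betw e {1..n} {1..n}" using Iinj unfolding bij_betw_def by simp
  define P where "P = inv_into {1..n} e"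
  have Pr: "P a \<in> {1..n}" if "a \<in> {1..n}" for a
    unfolding P_def using that img by (metis inv_into_into)
  have eP: "e (P a) = a" if "a \<in> {1..n}" for a
    unfolding P_def using that img by (metis f_inv_into_f)
  have Pe: "P (e u) = u" if "u \<in> {1..n}" for u
    unfolding P_def using that Iinj by (metis inv_into_f_f)
  have Pinj: "inj_on P {1..n}"
    unfolding P_def using bij by (metis bij_betw_def bij_betw_inv_into)
  have F2: "P (hdv v) = v" if v: "v \<in> V" for v
  proof -
    have "v \<in> {1..n}" using v rng by blast
    then show ?thesis using I2 Pe v by metis
  qed
  have F3: "P a < P (sc a)" if a: "a \<in> {1..n}" "hasS a" for a
  proof -
    define u where "u = P (sc a)"
    have scn: "sc a \<in> {1..n}" using sc_n a by blast
    have u: "u \<in> {1..n}" "e u = sc a" using Pr eP scn u_def by auto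
    have "u \<notin> V"
    proof
      assume "u \<in> V"
      then have "e u = hdv u" using I2 u by blast
      then show False using sc_not_hd[OF a \<open>u \<in> V\<close>] u by simp
    qed
    then obtain v where v: "1 \<le> v" "v < u" "hasS (e v)" "e u = sc (e v)" using I3 u by blast
    then have "e v = a" using sc_inj a u by metis
    moreover have "v \<in> {1..n}" using v u by auto
    ultimately have "P a = v" using Pe by metis
    then show ?thesis using v u_def by simp
  qed
  have F4: "P a < P a'" if a: "a \<in> {1..n}" "a' \<in> {1..n}" "hasS a" "hasS a'" "P (sc a) < P (sc a')" for a a'
  proof -
    have c: "1 \<le> P a \<and> P a < P (sc a) \<and> P (sc a) < P (sc a') \<and> P (sc a') \<le> n \<and> 1 \<le> P a' \<and> P a' < P (sc a')
         \<and> hasS (e (P a)) \<and> hasS (e (P a')) \<and> e (P (sc a)) = sc (e (P a)) \<and> e (P (sc a')) = sc (e (P a'))"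
      using a F3 Pr eP sc_n by (simp add: Suc_le_eq)
    show ?thesis by (rule I4[rule_format, OF c])
  qed
  have F5: "f a \<le> P a" if "a \<in> {1..n}" for a
    using I6 Pr eP that by metis
  show ?thesis using Pr Pinj F2 F3 F4 F5 by blast
qed

end

lemma cfg_x:
  assumes x: "x \<in> S_complement n G"
  shows "cfg n (posx n G x) (arcsx n G x)"
proof
  note pp = posx_props[OF x]
  show "\<And>a. a \<in> {1..n} \<Longrightarrow> posx n G x a \<in> {1..n}" using pp(1) by blast
  show "inj_on (posx n G x) {1..n}"
  proof (rule inj_onI)
    fix a b assume ab: "a \<in> {1..n}" "b \<in> {1..n}" "posx n G x a = posx n G x b"
    show "a = b"
    proof (rule ccontr)
      assume "a \<noteq> b"
      then have "x a \<noteq> x b" using Sc_inj[OF x] ab by blast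
      then have "x a < x b \<or> x b < x a" by linarith
      then show False using pp(2) ab by (metis less_irrefl)
    qed
  qed
  show "\<And>i j. (i, j) \<in> arcsx n G x \<Longrightarrow> 1 \<le> i \<and> i < j \<and> j \<le> n \<and> posx n G x i < posx n G x j"
  proof -
    fix i j assume "(i, j) \<in> arcsx n G x"
    then have h: "1 \<le> i \<and> i < j \<and> j \<le> n \<and> x i - x j > 1" unfolding arcsx_def by auto
    then have "x j < x i" by simp
    moreover have "i \<in> {1..n}" "j \<in> {1..n}" using h by auto
    ultimately show "1 \<le> i \<and> i < j \<and> j \<le> n \<and> posx n G x i < posx n G x j" using pp(2) h by blast
  qed
qed

lemma arcsx_sub: "arcsx n G x \<subseteq> {1..n} \<times> {1..n}" unfolding arcsx_def by auto

context pfn begin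

lemma surj_point:
  assumes gc: "\<And>i. i \<in> {1..n} \<Longrightarrow> hasS i \<Longrightarrow> {i, sc i} \<in> G"
    and out: "\<And>i. i \<notin> {1..n} \<Longrightarrow> f i = 0"
  shows "\<exists>x \<in> S_complement n G. Sig n (posx n G x) (arcsx n G x) = f"
proof -
  obtain P where Pr: "\<forall>a\<in>{1..n}. P a \<in> {1..n}" and Pinj: "inj_on P {1..n}"
    and F2: "\<forall>v\<in>V. P (hdv v) = v"
    and F3: "\<forall>a\<in>{1..n}. hasS a \<longrightarrow> P a < P (sc a)"
    and F4: "\<forall>a\<in>{1..n}. \<forall>a'\<in>{1..n}. hasS a \<and> hasS a' \<and> P (sc a) < P (sc a') \<longrightarrow> P a < P a'"
    and F5: "\<forall>a\<in>{1..n}. f a \<le> P a"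
    using P_exists by blast
  have Peq: "\<And>a b. a \<in> {1..n} \<Longrightarrow> b \<in> {1..n} \<Longrightarrow> P a = P b \<Longrightarrow> a = b"
    using Pinj by (meson inj_onD)
  define U where "U = (\<lambda>u v. \<exists>a\<in>{1..n}. hasS a \<and> u \<le> P a \<and> P (sc a) \<le> v)"
  have up: "\<And>u v u' v'. U u v \<Longrightarrow> u' \<le> u \<Longrightarrow> v \<le> v' \<Longrightarrow> U u' v'"
    unfolding U_def by (meson order_trans)
  have "\<exists>t :: nat \<Rightarrow> real. \<forall>u v. 1 \<le> u \<and> u < v \<and> v \<le> n \<longrightarrow>
           t u < t v \<and> (U u v \<longrightarrow> t v - t u > 1) \<and> (\<not> U u v \<longrightarrow> t v - t u < 1)"
    by (rule realize) (erule up, assumption+)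
  then obtain t :: "nat \<Rightarrow> real" where t: "\<forall>u v. 1 \<le> u \<and> u < v \<and> v \<le> n \<longrightarrow>
           t u < t v \<and> (U u v \<longrightarrow> t v - t u > 1) \<and> (\<not> U u v \<longrightarrow> t v - t u < 1)"
    by blast
  define x where "x = (\<lambda>i. if i \<in> {1..n} then - t (P i) else 0)"
  have tP: "t (P a) < t (P b) \<and> (U (P a) (P b) \<longrightarrow> t (P b) - t (P a) > 1) \<and> (\<not> U (P a) (P b) \<longrightarrow> t (P b) - t (P a) < 1)"
    if "a \<in> {1..n}" "b \<in> {1..n}" "P a < P b" for a b
  proof -
    have "1 \<le> P a" "P b \<le> n" using Pr that by auto
    then show ?thesis using t that by blast
  qed
  have xgt: "x b < x a \<longleftrightarrow> P a < P b" if ab: "a \<in> {1..n}" "b \<in> {1..n}" for a b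
  proof
    assume "P a < P b" then show "x b < x a" using tP[OF ab] ab unfolding x_def by simp
  next
    assume h: "x b < x a"
    show "P a < P b"
    proof (rule ccontr)
      assume "\<not> P a < P b"
      then consider "P a = P b" | "P b < P a" by linarith
      then show False
      proof cases
        case 1 then have "a = b" using Peq ab by blast
        then show False using h by simp
      next
        case 2 then have "x a < x b" using tP[of b a] ab unfolding x_def by simp
        then show False using h by simp
      qed
    qed
  qed
  have x1: "(x a - x b > 1 \<longleftrightarrow> U (P a) (P b)) \<and> x a - x b \<noteq> 1"
    if ab: "a \<in> {1..n}" "b \<in> {1..n}" "P a < P b" for a b
  proof -
    have "x a - x b = t (P b) - t (P a)" using ab unfolding x_def by simp
    then show ?thesis using tP[OF ab] by auto
  qed
  have xS: "x \<in> S_complement n G"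
    unfolding S_complement_def
  proof (intro CollectI conjI allI impI)
    fix i :: nat assume "i \<notin> {1..n}" then show "x i = 0" unfolding x_def by auto
  next
    fix i j assume ij: "1 \<le> i \<and> i < j \<and> j \<le> n"
    then have "i \<in> {1..n}" "j \<in> {1..n}" "i \<noteq> j" by auto
    then have "P i \<noteq> P j" using Peq by blast
    then have "P i < P j \<or> P j < P i" by linarith
    then have "x j < x i \<or> x i < x j" using xgt \<open>i \<in> {1..n}\<close> \<open>j \<in> {1..n}\<close> by blast
    then show "x i - x j \<noteq> 0" by auto
  next
    fix i j assume ij: "1 \<le> i \<and> i < j \<and> j \<le> n \<and> {i, j} \<in> G"
    then have ijn: "i \<in> {1..n}" "j \<in> {1..n}" "i \<noteq> j" by auto
    then have "P i \<noteq> P j" using Peq by blast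
    then have "P i < P j \<or> P j < P i" by linarith
    then show "x i - x j \<noteq> 1"
    proof
      assume "P i < P j" then show ?thesis using x1 ijn by blast
    next
      assume "P j < P i" then have "x i < x j" using xgt ijn by blast
      then show ?thesis by simp
    qed
  qed
  define A where "A = arcsx n G x"
  have Asub: "A \<subseteq> {1..n} \<times> {1..n}" unfolding A_def by (rule arcsx_sub)
  have cP: "cfg n P A"
  proof
    show "\<And>a. a \<in> {1..n} \<Longrightarrow> P a \<in> {1..n}" using Pr by blast
    show "inj_on P {1..n}" by (rule Pinj)
    fix i j assume "(i, j) \<in> A"
    then have h: "1 \<le> i \<and> i < j \<and> j \<le> n \<and> x i - x j > 1" unfolding A_def arcsx_def by auto
    then have "x j < x i" by simp
    moreover have "i \<in> {1..n}" "j \<in> {1..n}" using h by auto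
    ultimately show "1 \<le> i \<and> i < j \<and> j \<le> n \<and> P i < P j" using xgt h by blast
  qed
  define C where "C = {(a, sc a) | a. a \<in> {1..n} \<and> hasS a}"
  have CA: "(a, sc a) \<in> A" if a: "a \<in> {1..n}" "hasS a" for a
  proof -
    have sp: "a < sc a" "sc a \<in> {1..n}" using sc_props[OF a(2)] sc_n[OF a(2)] by auto
    have lt: "P a < P (sc a)" using F3 a by blast
    have "U (P a) (P (sc a))" unfolding U_def using a by blast
    then have "x a - x (sc a) > 1" using x1[OF a(1) sp(2) lt] by blast
    then show ?thesis unfolding A_def arcsx_def using a sp gc by auto
  qed
  have dom: "\<exists>a\<in>{1..n}. hasS a \<and> P i \<le> P a \<and> P (sc a) \<le> P l" if il: "(i, l) \<in> A" for i l
  proof -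
    have h: "1 \<le> i \<and> i < l \<and> l \<le> n \<and> x i - x l > 1" using il unfolding A_def arcsx_def by auto
    then have n: "i \<in> {1..n}" "l \<in> {1..n}" by auto
    have "x l < x i" using h by simp
    then have lt: "P i < P l" using xgt n by blast
    then have "U (P i) (P l)" using x1[OF n lt] h by blast
    then show ?thesis unfolding U_def by blast
  qed
  have nonnest: "a = a'" if a: "a \<in> {1..n}" "a' \<in> {1..n}" "hasS a" "hasS a'"
     "P a \<le> P a'" "P (sc a') \<le> P (sc a)" for a a'
  proof (cases "sc a = sc a'")
    case True then show ?thesis using sc_inj a by blast
  next
    case False
    have "sc a \<in> {1..n}" "sc a' \<in> {1..n}" using sc_n a by auto
    then have "P (sc a') \<noteq> P (sc a)" using Peq False by metis
    then have "P (sc a') < P (sc a)" using a by simp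
    then have "P a' < P a" using F4 a by blast
    then show ?thesis using a by simp
  qed
  have RmC: "Rm P A = C"
  proof
    show "Rm P A \<subseteq> C"
    proof
      fix p assume pR: "p \<in> Rm P A"
      obtain i l where p: "p = (i, l)" by (cases p)
      have ilA: "(i, l) \<in> A" using pR p cfg.R_A[OF cP] by blast
      obtain a where a: "a \<in> {1..n}" "hasS a" "P i \<le> P a" "P (sc a) \<le> P l" using dom[OF ilA] by blast
      have "(a, sc a) = (i, l)"
      proof (rule ccontr)
        assume "(a, sc a) \<noteq> (i, l)"
        then show False using cfg.R_noin[OF cP, of i l a "sc a"] pR p CA[OF a(1,2)] a by blast
      qed
      then show "p \<in> C" unfolding C_def using a p by blast
    qed
  next
    show "C \<subseteq> Rm P A"
    proof
      fix p assume "p \<in> C"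
      then obtain a where a: "a \<in> {1..n}" "hasS a" "p = (a, sc a)" unfolding C_def by blast
      have "\<not> (\<exists>(j, k)\<in>A. (j, k) \<noteq> (a, sc a) \<and> P a \<le> P j \<and> P k \<le> P (sc a))"
      proof
        assume "\<exists>(j, k)\<in>A. (j, k) \<noteq> (a, sc a) \<and> P a \<le> P j \<and> P k \<le> P (sc a)"
        then obtain j k where jk: "(j, k) \<in> A" "(j, k) \<noteq> (a, sc a)" "P a \<le> P j" "P k \<le> P (sc a)" by blast
        obtain a' where a': "a' \<in> {1..n}" "hasS a'" "P j \<le> P a'" "P (sc a') \<le> P k" using dom[OF jk(1)] by blast
        have "a = a'" using nonnest[of a a'] a a' jk by linarith
        then have "P j = P a" "P k = P (sc a)" using jk a' by auto
        moreover have "j \<in> {1..n}" "k \<in> {1..n}" "sc a \<in> {1..n}" using Asub jk(1) sc_n a by auto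
        ultimately have "j = a" "k = sc a" using Peq a by metis+
        then show False using jk(2) by simp
      qed
      then show "p \<in> Rm P A" unfolding Rm_def using CA[OF a(1,2)] a(3) by blast
    qed
  qed
  have L1: "(i, k) \<in> (C \<union> C\<inverse>)\<^sup>* \<Longrightarrow> f k = f i" for i k
  proof (induction rule: rtrancl_induct)
    case (step y z)
    have "f y = f z" using step(2) sc_props unfolding C_def by auto
    then show ?case using step by simp
  qed simp
  have L2: "(hdv (f k), k) \<in> C\<^sup>*" if "k \<in> {1..n}" for k
    using that
  proof (induction k rule: less_induct)
    case (less k)
    have fkV: "f k \<in> V" using less.prems by blast
    have hp: "hdv (f k) \<in> {1..n}" "f (hdv (f k)) = f k" "hdv (f k) \<le> k"
      using hdv_props[OF fkV] less.prems by auto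
    show ?case
    proof (cases "hdv (f k) = k")
      case True then show ?thesis by simp
    next
      case False
      then have hlt: "hdv (f k) < k" using hp by simp
      let ?T = "{j \<in> {1..n}. j < k \<and> f j = f k}"
      have Tne: "hdv (f k) \<in> ?T" using hp hlt by simp
      define c where "c = Max ?T"
      have Tfin: "finite ?T" by simp
      have cT: "c \<in> ?T" unfolding c_def by (rule Max_in[OF Tfin]) (use Tne in blast)
      have cmax: "\<And>j. j \<in> ?T \<Longrightarrow> j \<le> c" unfolding c_def by (rule Max_ge) auto
      have hc: "hasS c" unfolding hasS_def using cT less.prems by (intro exI[of _ k]) auto
      have scle: "sc c \<le> k" unfolding sc_def using cT less.prems by (intro Least_le) auto
      have scp: "c < sc c" "f (sc c) = f c" using sc_props[OF hc] by auto
      have sck: "sc c = k"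
      proof (rule ccontr)
        assume "sc c \<noteq> k"
        then have "sc c \<in> ?T" using scle scp cT sc_n[OF hc] by auto
        then show False using cmax scp by fastforce
      qed
      have "(c, k) \<in> C" unfolding C_def using cT hc sck by blast
      moreover have "(hdv (f c), c) \<in> C\<^sup>*" using less.IH[of c] cT by auto
      moreover have "f c = f k" using cT by simp
      ultimately show ?thesis by (metis rtrancl.rtrancl_into_rtrancl)
    qed
  qed
  have SigP: "Sig n P A = f"
  proof
    fix i show "Sig n P A i = f i"
    proof (cases "i \<in> {1..n}")
      case False then show ?thesis using out unfolding Sig_def by auto
    next
      case True
      have fiV: "f i \<in> V" using True by blast
      define h where "h = hdv (f i)"
      have "(h, i) \<in> C\<^sup>*" using L2[OF True] h_def by simp
      then have "(i, h) \<in> (C\<inverse>)\<^sup>*" by (simp add: rtrancl_converseI)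
      then have "(i, h) \<in> (C \<union> C\<inverse>)\<^sup>*" using rtrancl_mono[of "C\<inverse>" "C \<union> C\<inverse>"] by blast
      then have hch: "h \<in> chn P A i" unfolding chn_def RmC by simp
      have hdp: "cfg.hd P A i \<in> chn P A i" "\<forall>k\<in>chn P A i. P (cfg.hd P A i) \<le> P k"
        using cfg.hd_props[OF cP] by auto
      have le1: "P (cfg.hd P A i) \<le> f i" using hdp hch F2 fiV h_def by metis
      have "(i, cfg.hd P A i) \<in> (C \<union> C\<inverse>)\<^sup>*" using hdp(1) unfolding chn_def RmC by simp
      then have "f (cfg.hd P A i) = f i" by (rule L1)
      moreover have "cfg.hd P A i \<in> {1..n}" using cfg.hd_n[OF cP True] .
      ultimately have le2: "f i \<le> P (cfg.hd P A i)" using F5 by metis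
      show ?thesis using cfg.Sig_hd[OF cP True] le1 le2 by simp
    qed
  qed
  have cP0: "cfg n P {}" using Pr Pinj by unfold_locales auto
  have cX: "cfg n (posx n G x) {}" using cfg.P_range[OF cfg_x[OF xS]] cfg.P_inj[OF cfg_x[OF xS]]
    by unfold_locales auto
  have eqP: "posx n G x a = P a" if "a \<in> {1..n}" for a
  proof (rule order_iso_eq[OF cX cP0 _ that])
    fix a b assume ab: "a \<in> {1..n}" "b \<in> {1..n}"
    show "posx n G x a < posx n G x b \<longleftrightarrow> P a < P b"
      using posx_props(2)[OF xS] xgt[OF ab] ab by blast
  qed
  have "Sig n (posx n G x) A = Sig n P A" by (rule Sig_cong[OF eqP Asub])
  then show ?thesis using xS SigP A_def by auto
qed

end

lemma ge_of_pos:
  assumes x: "x \<in> S_complement n G" and a: "a \<in> {1..n}" and b: "b \<in> {1..n}"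
    and le: "posx n G x a \<le> posx n G x b"
  shows "x b \<le> x a"
proof (cases "a = b")
  case False
  then have "posx n G x a \<noteq> posx n G x b" using cfg.P_eq[OF cfg_x[OF x]] a b by blast
  then have "posx n G x a < posx n G x b" using le by simp
  then show ?thesis using posx_props(2)[OF x] a b by auto
qed simp

lemma arcs_transfer:
  assumes x: "x \<in> S_complement n G" and y: "y \<in> S_complement n G"
    and eqS: "Sig n (posx n G x) (arcsx n G x) = Sig n (posx n G y) (arcsx n G y)"
    and eqP: "\<forall>i\<in>{1..n}. posx n G x i = posx n G y i"
    and il: "(i, l) \<in> arcsx n G x"
  shows "(i, l) \<in> arcsx n G y"
proof -
  note cx = cfg_x[OF x] and cy = cfg_x[OF y]
  obtain j k where jk: "(j, k) \<in> Rm (posx n G x) (arcsx n G x)"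
    "posx n G x i \<le> posx n G x j" "posx n G x k \<le> posx n G x l"
    using cfg.dominate[OF cx il] by blast
  have jk2: "(j, k) \<in> Rm (posx n G y) (arcsx n G y)"
    unfolding cfg.R_char[OF cy] eqS[symmetric] using jk(1) unfolding cfg.R_char[OF cx] .
  have "(j, k) \<in> arcsx n G y" using cfg.R_A[OF cy jk2] .
  then have yjk: "y j - y k > 1" unfolding arcsx_def by auto
  have ilh: "1 \<le> i \<and> i < l \<and> l \<le> n \<and> {i, l} \<in> G" using il unfolding arcsx_def by auto
  have jkn: "j \<in> {1..n}" "k \<in> {1..n}" using cfg.R_sub[OF cx jk(1)] by auto
  have iln: "i \<in> {1..n}" "l \<in> {1..n}" using ilh by auto
  have "y j \<le> y i" using ge_of_pos[OF y iln(1) jkn(1)] jk(2) eqP iln jkn by simp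
  moreover have "y l \<le> y k" using ge_of_pos[OF y jkn(2) iln(2)] jk(3) eqP iln jkn by simp
  ultimately have "y i - y l > 1" using yjk by simp
  then show ?thesis unfolding arcsx_def using ilh by simp
qed

theorem theorem3p1:
  fixes n :: nat and G :: "nat set set"
  assumes "n \<ge> 1" and "simple_graph_on n G"
  shows "bij_betw (sigma_nG n G) (S_regions n G) (G_parking_functions n G)"
  unfolding bij_betw_def
proof (intro conjI)
  show "inj_on (sigma_nG n G) (S_regions n G)"
  proof (rule inj_onI)
    fix R1 R2 assume R1: "R1 \<in> S_regions n G" and R2: "R2 \<in> S_regions n G"
      and eq: "sigma_nG n G R1 = sigma_nG n G R2"
    obtain x where x: "x \<in> S_complement n G" "R1 = connected_component_set (S_complement n G) x"
      using R1 unfolding S_regions_def by blast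
    obtain y where y: "y \<in> S_complement n G" "R2 = connected_component_set (S_complement n G) y"
      using R2 unfolding S_regions_def by blast
    have eqS: "Sig n (posx n G x) (arcsx n G x) = Sig n (posx n G y) (arcsx n G y)"
      using eq sigma_x[OF x(1)] sigma_x[OF y(1)] x(2) y(2) by simp
    have eqP: "\<forall>i\<in>{1..n}. posx n G x i = posx n G y i"
      by (rule cfg_inj[OF cfg_x[OF x(1)] cfg_x[OF y(1)] eqS])
    have eqP': "\<forall>i\<in>{1..n}. posx n G y i = posx n G x i" using eqP by simp
    have ord: "x i > x j \<longleftrightarrow> y i > y j" if "i \<in> {1..n}" "j \<in> {1..n}" for i j
    proof -
      have "x i > x j \<longleftrightarrow> posx n G x i < posx n G x j" using posx_props(2)[OF x(1)] that by auto
      also have "\<dots> \<longleftrightarrow> posx n G y i < posx n G y j" using eqP that by simp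
      also have "\<dots> \<longleftrightarrow> y i > y j" using posx_props(2)[OF y(1)] that by auto
      finally show ?thesis .
    qed
    have arc: "x i - x j > 1 \<longleftrightarrow> y i - y j > 1" if h: "1 \<le> i \<and> i < j \<and> j \<le> n \<and> {i, j} \<in> G" for i j
    proof
      assume "x i - x j > 1"
      then have "(i, j) \<in> arcsx n G x" unfolding arcsx_def using h by simp
      then have "(i, j) \<in> arcsx n G y" using arcs_transfer[OF x(1) y(1) eqS eqP] by blast
      then show "y i - y j > 1" unfolding arcsx_def by simp
    next
      assume "y i - y j > 1"
      then have "(i, j) \<in> arcsx n G y" unfolding arcsx_def using h by simp
      then have "(i, j) \<in> arcsx n G x" using arcs_transfer[OF y(1) x(1) eqS[symmetric] eqP'] by blast
      then show "x i - x j > 1" unfolding arcsx_def by simp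
    qed
    have "same_pat n G x y" unfolding same_pat_def using ord arc by blast
    then have "y \<in> connected_component_set (S_complement n G) x" using pat_comp x(1) y(1) by blast
    then show "R1 = R2" using x(2) y(2) connected_component_eq by blast
  qed
next
  show "sigma_nG n G ` S_regions n G = G_parking_functions n G"
  proof
    show "sigma_nG n G ` S_regions n G \<subseteq> G_parking_functions n G"
    proof
      fix g assume "g \<in> sigma_nG n G ` S_regions n G"
      then obtain x where x: "x \<in> S_complement n G" "g = sigma_nG n G (connected_component_set (S_complement n G) x)"
        unfolding S_regions_def by blast
      have "Sig n (posx n G x) (arcsx n G x) \<in> G_parking_functions n G"
        by (rule cfg.Sig_GPF[OF cfg_x[OF x(1)]]) (auto simp: arcsx_def)
      then show "g \<in> G_parking_functions n G" using x sigma_x by simp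
    qed
  next
    show "G_parking_functions n G \<subseteq> sigma_nG n G ` S_regions n G"
    proof
      fix f assume f: "f \<in> G_parking_functions n G"
      then have pf: "parking_function n f"
        and gcf: "\<forall>i\<in>{1..n}. (\<exists>j. i < j \<and> j \<le> n \<and> f i = f j) \<longrightarrow>
            {i, LEAST j. i < j \<and> j \<le> n \<and> f i = f j} \<in> G"
        unfolding G_parking_functions_def by auto
      interpret pfn n f
        using pf unfolding parking_function_def by unfold_locales auto
      have gc: "{i, sc i} \<in> G" if "i \<in> {1..n}" "hasS i" for i
        using gcf that unfolding hasS_def sc_def by blast
      have out: "f i = 0" if "i \<notin> {1..n}" for i using pf that unfolding parking_function_def by blast
      obtain x where x: "x \<in> S_complement n G" "Sig n (posx n G x) (arcsx n G x) = f"
        using surj_point[OF gc out] by blast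
      have "connected_component_set (S_complement n G) x \<in> S_regions n G"
        unfolding S_regions_def using x(1) by blast
      moreover have "sigma_nG n G (connected_component_set (S_complement n G) x) = f"
        using sigma_x[OF x(1)] x(2) by simp
      ultimately show "f \<in> sigma_nG n G ` S_regions n G" by (metis imageI)
    qed
  qed
qed


end
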